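(* Let $X$ be a digraph. All eigenvalues of $H(X)$ lie in the open interval $(-\sqrt{3},\sqrt{3})$ if and only if every weakly connected component $Y$ of $X$ satisfies one of the following: $\Gamma(Y)$ is isomorphic to a path with at most $3$ edges (including a single vertex); or $\Gamma(Y)$ is isomorphic to the $4$-cycle $C_4$ and $Y$ is isomorphic either to $\widetilde{C}_4$ or to a strongly connected digraph with underlying graph $C_4$ having exactly two digons.
   Context: A digraph $X$ has a finite vertex set and an arc set of ordered pairs of distinct vertices; $\{x,y\}$ is a digon if both $xy,yx$ are arcs. The underlying graph $\Gamma(X)$ is the simple graph with an edge $\{x,y\}$ whenever $xy$ or $yx$ is an arc; weakly connected components of $X$ are the sub-digraphs induced on the components of $\Gamma(X)$. The Hermitian adjacency matrix $H(X)$ has $(u,v)$-entry $1$ if $uv$ and $vu$ are arcs, $i$ if only $uv$ is an arc, $-i$ if only $vu$ is an arc, and $0$ otherwise. $\widetilde{C}_4$ is the oriented graph on vertices $v_0,v_1,v_2,v_3$ with arcs $v_0v_1, v_1v_2, v_2v_3, v_0v_3$ (the directed $4$-cycle with one arc reversed). *)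

theory Defs
  imports "HOL-Analysis.Analysis"
begin

text \<open>A digraph X with (finite) vertex set UNIV :: 'n set and arc set A (irreflexive).\<close>

definition herm :: "('n::finite \<times> 'n) set \<Rightarrow> complex^'n^'n" where
  "herm A = (\<chi> u v. if (u,v) \<in> A \<and> (v,u) \<in> A then 1
                     else if (u,v) \<in> A then \<i>
                     else if (v,u) \<in> A then - \<i> else 0)"

definition mat_eigenvalue :: "complex^'n^'n \<Rightarrow> complex \<Rightarrow> bool" where
  "mat_eigenvalue M l \<longleftrightarrow> (\<exists>v. v \<noteq> 0 \<and> M *v v = l *s v)"

definition und :: "('a \<times> 'a) set \<Rightarrow> 'a \<Rightarrow> 'a \<Rightarrow> bool" where
  "und A x y \<longleftrightarrow> (x,y) \<in> A \<or> (y,x) \<in> A"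

definition weak_components :: "('a \<times> 'a) set \<Rightarrow> 'a set set" where
  "weak_components A = UNIV // ((A \<union> A\<inverse>)\<^sup>*)"

definition und_iso_path :: "('a \<times> 'a) set \<Rightarrow> 'a set \<Rightarrow> nat \<Rightarrow> bool" where
  "und_iso_path A C k \<longleftrightarrow> (\<exists>f. bij_betw f {0..k} C \<and>
     (\<forall>i\<in>{0..k}. \<forall>j\<in>{0..k}. und A (f i) (f j) \<longleftrightarrow> (i = j + 1 \<or> j = i + 1)))"

definition und_iso_C4 :: "('a \<times> 'a) set \<Rightarrow> 'a set \<Rightarrow> bool" where
  "und_iso_C4 A C \<longleftrightarrow> (\<exists>f. bij_betw f {0..<4::nat} C \<and>
     (\<forall>i\<in>{0..<4}. \<forall>j\<in>{0..<4}. und A (f i) (f j) \<longleftrightarrow> (j = (i + 1) mod 4 \<or> i = (j + 1) mod 4)))"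

definition iso_tilde_C4 :: "('a \<times> 'a) set \<Rightarrow> 'a set \<Rightarrow> bool" where
  "iso_tilde_C4 A C \<longleftrightarrow> (\<exists>f. bij_betw f {0..<4::nat} C \<and>
     (\<forall>i\<in>{0..<4}. \<forall>j\<in>{0..<4}. (f i, f j) \<in> A \<longleftrightarrow> (i, j) \<in> {(0,1),(1,2),(2,3),(0,3)}))"

definition strongly_connected_on :: "('a \<times> 'a) set \<Rightarrow> 'a set \<Rightarrow> bool" where
  "strongly_connected_on A C \<longleftrightarrow> (\<forall>x\<in>C. \<forall>y\<in>C. (x,y) \<in> (A \<inter> C \<times> C)\<^sup>*)"

definition digons_on :: "('a \<times> 'a) set \<Rightarrow> 'a set \<Rightarrow> 'a set set" where
  "digons_on A C = {{x,y} | x y. x \<in> C \<and> y \<in> C \<and> (x,y) \<in> A \<and> (y,x) \<in> A}"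

end

theory Submission
  imports Defs
begin

abbreviation hh :: "('n::finite \<times> 'n) set \<Rightarrow> 'n \<Rightarrow> 'n \<Rightarrow> complex" where
  "hh A u v \<equiv> herm A $ u $ v"

lemma hh_def: "hh A u v = (if (u,v) \<in> A \<and> (v,u) \<in> A then 1
                     else if (u,v) \<in> A then \<i>
                     else if (v,u) \<in> A then - \<i> else 0)"
  by (simp add: herm_def)

lemma hh_cnj: "hh A v u = cnj (hh A u v)"
  by (simp add: hh_def)

lemma und_sym: "und A u v = und A v u" by (auto simp: und_def)

lemma hh_cmod: "cmod (hh A u v) = (if und A u v then 1 else 0)"
  by (auto simp: hh_def und_def)

lemma hh_zero: "hh A u v = 0 \<longleftrightarrow> \<not> und A u v"
  by (auto simp: hh_def und_def)

lemma hh_vals: "und A u v \<Longrightarrow> hh A u v \<in> {1, \<i>, - \<i>}"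
  by (auto simp: hh_def und_def)

lemma hh_mult_cnj: "und A u v \<Longrightarrow> hh A u v * hh A v u = 1"
  by (auto simp: hh_def und_def)

lemma mv_nth: "(M *v x) $ i = (\<Sum>j\<in>UNIV. M $ i $ j * x $ j)"
  by (simp add: matrix_vector_mult_def)

lemma norm_sq_vec: "(norm (x::complex^'n))\<^sup>2 = (\<Sum>i\<in>UNIV. (cmod (x $ i))\<^sup>2)"
  by (simp add: norm_vec_def L2_set_def sum_nonneg)

lemma inner_complex_cnj: "inner (a::complex) b = Re (cnj a * b)"
  by (simp add: inner_complex_def)

lemma inner_vec_sum: "inner (x::complex^'n) y = (\<Sum>i\<in>UNIV. Re (cnj (x$i) * y$i))"
  by (simp add: inner_vec_def inner_complex_cnj)

lemma inner_vec_sum': "inner (x::complex^'n) y = Re (\<Sum>i\<in>UNIV. cnj (x$i) * y$i)"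
  by (simp add: inner_vec_sum Re_sum)

lemma herm_sym:
  fixes A :: "('n::finite \<times> 'n) set"
  shows "inner (herm A *v x) y = inner x (herm A *v y)"
proof -
  have "(\<Sum>i\<in>UNIV. cnj ((herm A *v x)$i) * y$i) = (\<Sum>i\<in>UNIV. \<Sum>j\<in>UNIV. cnj (hh A i j) * cnj (x$j) * y$i)"
    by (simp add: mv_nth sum_distrib_right)
  also have "\<dots> = (\<Sum>j\<in>UNIV. \<Sum>i\<in>UNIV. cnj (hh A i j) * cnj (x$j) * y$i)"
    by (rule sum.swap)
  also have "\<dots> = (\<Sum>j\<in>UNIV. cnj (x$j) * (herm A *v y)$j)"
    apply (simp add: mv_nth sum_distrib_left)
    apply (rule sum.cong, simp)+
    apply (subst hh_cnj) by simp
  finally show ?thesis by (simp add: inner_vec_sum')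
qed

lemma quad_zero:
  fixes a b :: real
  assumes "\<forall>t. 0 \<le> 2*t*a + t^2*b" "a \<ge> 0" "b \<ge> 0"
  shows "a = 0"
proof (rule ccontr)
  assume "a \<noteq> 0"
  hence ap: "a > 0" using assms by simp
  define t where "t = - a / (b+1)"
  have b1: "b + 1 > 0" using assms(3) by simp
  have bt: "(b+1)*t = -a" using b1 by (simp add: t_def)
  have "0 \<le> 2*t*a + t^2*b" using assms(1) by blast
  hence "0 \<le> (b+1)^2 * (2*t*a + t^2*b)" by simp
  also have "(b+1)^2 * (2*t*a + t^2*b) = 2*(b+1)*((b+1)*t)*a + ((b+1)*t)^2*b"
    by (simp add: algebra_simps power2_eq_square)
  also have "\<dots> = - (a^2 * (b+2))" unfolding bt by (simp add: algebra_simps power2_eq_square)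
  finally show False using ap assms(3)
    by (smt (verit) mult_pos_pos zero_less_power)
qed

lemma cscaleR: "(r::real) *\<^sub>R (z::complex) = complex_of_real r * z"
  by (simp add: scaleR_conv_of_real)

lemma scaleR_eq_scalar: "(r::real) *\<^sub>R (v::complex^'n) = complex_of_real r *s v"
  unfolding vec_eq_iff by (simp only: vector_scaleR_component vector_scalar_mult_def vec_lambda_beta cscaleR simp_thms)

lemma nsq_expand: "norm (x + t *\<^sub>R y)^2 = norm x^2 + 2*t*inner x y + t^2 * norm (y::'a::real_inner)^2"
  unfolding power2_norm_eq_inner
  by (simp add: inner_add_left inner_add_right inner_commute algebra_simps power2_eq_square)

lemma exists_big_eig:
  fixes A :: "('n::finite \<times> 'n) set"
  assumes w0: "w \<noteq> 0" and wbig: "norm (herm A *v w)^2 \<ge> 3 * norm w ^2"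
  shows "\<exists>r. mat_eigenvalue (herm A) (complex_of_real r) \<and> r^2 \<ge> 3"
proof -
  define T where "T = (\<lambda>v. herm A *v v)"
  define g where "g = (\<lambda>v. norm (T v)^2)"
  have linT: "T (x + y) = T x + T y" "T (c *\<^sub>R x) = c *\<^sub>R T x" "T (x - y) = T x - T y" for x y c
    using linear_iff[of "\<lambda>x. herm A *v x"] matrix_vector_mul_linear[of "herm A"]
    by (simp_all add: T_def matrix_vector_right_distrib matrix_vector_mult_diff_distrib)
  have symT: "inner (T x) y = inner x (T y)" for x y
    unfolding T_def by (rule herm_sym)
  have cont: "continuous_on (sphere 0 1) g"
    unfolding g_def T_def by (intro continuous_intros)
  have wn: "norm w > 0" using w0 by simp
  have wu: "(1/norm w) *\<^sub>R w \<in> sphere 0 1" using wn by simp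
  obtain v0 where v0: "v0 \<in> sphere 0 1" and v0max: "\<forall>y\<in>sphere 0 1. g y \<le> g v0"
    using continuous_attains_sup[OF compact_sphere _ cont] wu by blast
  define M where "M = g v0"
  have v0n: "norm v0 = 1" using v0 by simp
  have bound: "g v \<le> M * norm v ^2" for v
  proof (cases "v = 0")
    case True thus ?thesis by (simp add: g_def T_def)
  next
    case False
    define u where "u = (1/norm v) *\<^sub>R v"
    have u: "u \<in> sphere 0 1" using False by (simp add: u_def)
    have vu: "v = norm v *\<^sub>R u" using False by (simp add: u_def)
    have "g v = norm v ^2 * g u"
      by (subst vu, simp add: g_def linT power_mult_distrib)
    also have "\<dots> \<le> norm v ^2 * M" using v0max u by (simp add: M_def mult_left_mono)
    finally show ?thesis by (simp add: mult.commute)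
  qed
  have M3: "M \<ge> 3"
  proof -
    have "g w \<le> M * norm w ^2" by (rule bound)
    moreover have "3 * norm w ^2 \<le> g w" using wbig by (simp add: g_def T_def)
    ultimately have "3 * norm w^2 \<le> M * norm w^2" by linarith
    thus ?thesis using wn by simp
  qed
  define Q where "Q = (\<lambda>v. M * norm v ^2 - g v)"
  have Qnn: "Q v \<ge> 0" for v using bound[of v] by (simp add: Q_def)
  have Q0: "Q v0 = 0" using v0n by (simp add: Q_def M_def)
  define u where "u = M *\<^sub>R v0 - T (T v0)"
  have expand: "Q (v0 + t *\<^sub>R u) = Q v0 + 2*t*(M * inner v0 u - inner (T v0) (T u)) + t^2 * Q u" for t
    unfolding Q_def g_def linT nsq_expand by (simp add: algebra_simps)
  have key: "M * inner v0 u - inner (T v0) (T u) = norm u ^2"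
    by (simp add: symT u_def power2_norm_eq_inner inner_diff_left)
  have "\<forall>t. 0 \<le> 2*t*(norm u^2) + t^2 * Q u"
    using Qnn expand Q0 key by (metis add_0)
  hence "norm u ^2 = 0" using quad_zero Qnn by (metis zero_le_power2)
  hence TT: "T (T v0) = M *\<^sub>R v0" by (simp add: u_def)
  define s where "s = sqrt M"
  have s2: "s * s = M" using M3 by (simp add: s_def)
  have s3: "s^2 \<ge> 3" using M3 by (simp add: s_def)
  have v00: "v0 \<noteq> 0" using v0n by auto
  show ?thesis
  proof (cases "T v0 + s *\<^sub>R v0 = 0")
    case True
    hence "T v0 = (-s) *\<^sub>R v0" by (simp add: eq_neg_iff_add_eq_0)
    hence "mat_eigenvalue (herm A) (complex_of_real (-s))"
      using v00 by (auto simp: mat_eigenvalue_def T_def scaleR_eq_scalar)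
    thus ?thesis using s3 by (intro exI[of _ "-s"]) simp
  next
    case False
    define x where "x = T v0 + s *\<^sub>R v0"
    have "T x = s *\<^sub>R x"
      by (simp add: x_def linT TT s2[symmetric] algebra_simps)
    hence "mat_eigenvalue (herm A) (complex_of_real s)"
      using False by (auto simp: mat_eigenvalue_def T_def scaleR_eq_scalar x_def)
    thus ?thesis using s3 by blast
  qed
qed

lemma cmod_mult_le1: "cmod g \<le> 1 \<Longrightarrow> cmod (g * y) \<le> cmod y"
  by (simp add: norm_mult mult_left_le_one_le)

lemma row2_bound:
  assumes "cmod a \<le> 1" "cmod b \<le> 1"
  shows "(cmod (a * x + b * y))^2 \<le> (cmod x + cmod y)^2"
proof -
  have "cmod (a*x + b*y) \<le> cmod (a*x) + cmod (b*y)" by (rule norm_triangle_ineq)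
  also have "\<dots> \<le> cmod x + cmod y" by (rule add_mono[OF cmod_mult_le1[OF assms(1)] cmod_mult_le1[OF assms(2)]])
  finally show ?thesis by (simp add: power_mono)
qed

lemma row1_bound:
  assumes "cmod a \<le> 1"
  shows "(cmod (a * x))^2 \<le> (cmod x)^2"
  using cmod_mult_le1[OF assms] by (simp add: power_mono)

lemma path4:
  fixes g :: "nat \<Rightarrow> nat \<Rightarrow> complex" and y :: "nat \<Rightarrow> complex"
  assumes g: "\<And>i j. i<4 \<Longrightarrow> j<4 \<Longrightarrow> cmod (g i j) \<le> (if i = j+1 \<or> j = i+1 then 1 else 0)"
  shows "(\<Sum>i<4. (cmod (\<Sum>j<4. g i j * y j))^2) + ((cmod (y 0) - cmod (y 2))^2 + (cmod (y 1) - cmod (y 3))^2 + (cmod (y 0))^2 + (cmod (y 3))^2)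
         \<le> 3 * (\<Sum>j<4. (cmod (y j))^2)"
proof -
  have z: "g i j = 0" if "i<4" "j<4" "\<not>(i = j+1 \<or> j = i+1)" for i j
    using g[OF that(1,2)] that(3) by simp
  have u: "cmod (g i j) \<le> 1" if "i<4" "j<4" for i j
    using g[OF that] by (auto split: if_splits)
  have e: "(\<Sum>j<4. g i j * y j) = g i 0 * y 0 + g i 1 * y 1 + g i 2 * y 2 + g i 3 * y 3" for i
    by (simp add: eval_nat_numeral)
  have e2: "(\<Sum>i<4. F i) = F 0 + F 1 + F 2 + F (3::nat)" for F :: "nat \<Rightarrow> real"
    by (simp add: eval_nat_numeral)
  have r0: "(cmod (\<Sum>j<4. g 0 j * y j))^2 \<le> (cmod (y 1))^2"
    unfolding e using z[of 0 0] z[of 0 2] z[of 0 3] row1_bound[OF u[of 0 1]] by simp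
  have r1: "(cmod (\<Sum>j<4. g 1 j * y j))^2 \<le> (cmod (y 0) + cmod (y 2))^2"
    unfolding e using z[of 1 1] z[of 1 3] row2_bound[OF u[of 1 0] u[of 1 2]] by simp
  have r2: "(cmod (\<Sum>j<4. g 2 j * y j))^2 \<le> (cmod (y 1) + cmod (y 3))^2"
    unfolding e using z[of 2 0] z[of 2 2] row2_bound[OF u[of 2 1] u[of 2 3]] by simp
  have r3: "(cmod (\<Sum>j<4. g 3 j * y j))^2 \<le> (cmod (y 2))^2"
    unfolding e using z[of 3 0] z[of 3 1] z[of 3 3] row1_bound[OF u[of 3 2]] by simp
  have id: "p1^2 + (p0+p2)^2 + (p1+p3)^2 + p2^2 + ((p0-p2)^2 + (p1-p3)^2 + p0^2 + p3^2) = 3*(p0^2+p1^2+p2^2+p3^2)"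
    for p0 p1 p2 p3 :: real by (simp add: power2_eq_square algebra_simps)
  show ?thesis unfolding e2
    using r0 r1 r2 r3 id[of "cmod (y 1)" "cmod (y 0)" "cmod (y 2)" "cmod (y 3)"] by linarith
qed

lemma path4_strict:
  fixes g :: "nat \<Rightarrow> nat \<Rightarrow> complex" and y :: "nat \<Rightarrow> complex"
  assumes g: "\<And>i j. i<4 \<Longrightarrow> j<4 \<Longrightarrow> cmod (g i j) \<le> (if i = j+1 \<or> j = i+1 then 1 else 0)"
  shows "(\<Sum>i<4. (cmod (\<Sum>j<4. g i j * y j))^2) \<le> 3 * (\<Sum>j<4. (cmod (y j))^2)"
    and "(\<exists>j<4. y j \<noteq> 0) \<Longrightarrow> (\<Sum>i<4. (cmod (\<Sum>j<4. g i j * y j))^2) < 3 * (\<Sum>j<4. (cmod (y j))^2)"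
proof -
  let ?R = "(cmod (y 0) - cmod (y 2))^2 + (cmod (y 1) - cmod (y 3))^2 + (cmod (y 0))^2 + (cmod (y 3))^2"
  have P: "(\<Sum>i<4. (cmod (\<Sum>j<4. g i j * y j))^2) + ?R \<le> 3 * (\<Sum>j<4. (cmod (y j))^2)"
    by (rule path4[OF g])
  have "?R \<ge> 0" by simp
  thus "(\<Sum>i<4. (cmod (\<Sum>j<4. g i j * y j))^2) \<le> 3 * (\<Sum>j<4. (cmod (y j))^2)" using P by linarith
  assume "\<exists>j<4. y j \<noteq> 0"
  then obtain j where j: "j<4" "y j \<noteq> 0" by blast
  have "?R > 0"
  proof (rule ccontr)
    assume "\<not> ?R > 0"
    moreover have "(cmod (y 0) - cmod (y 2))^2 \<ge> 0" "(cmod (y 1) - cmod (y 3))^2 \<ge> 0"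
      "(cmod (y 0))^2 \<ge> 0" "(cmod (y 3))^2 \<ge> 0" by simp_all
    ultimately have "(cmod (y 0) - cmod (y 2))^2 = 0" "(cmod (y 1) - cmod (y 3))^2 = 0"
      "(cmod (y 0))^2 = 0" "(cmod (y 3))^2 = 0" by linarith+
    hence "y 0 = 0" "y 1 = 0" "y 2 = 0" "y 3 = 0" by simp_all
    with j show False by (auto simp: eval_nat_numeral less_Suc_eq)
  qed
  thus "(\<Sum>i<4. (cmod (\<Sum>j<4. g i j * y j))^2) < 3 * (\<Sum>j<4. (cmod (y j))^2)" using P by linarith
qed

definition wrel :: "('a \<times> 'a) set \<Rightarrow> ('a \<times> 'a) set" where
  "wrel A = (A \<union> A\<inverse>)\<^sup>*"

lemma equiv_wrel: "equiv UNIV (wrel A)"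
  unfolding wrel_def equiv_def
  by (auto simp: refl_rtrancl sym_rtrancl sym_Un_converse trans_rtrancl)

lemma wc_def2: "weak_components A = UNIV // wrel A"
  by (simp add: weak_components_def wrel_def)

lemma comp_mem: assumes C: "C \<in> weak_components A" and x: "x \<in> C" shows "C = wrel A `` {x}"
proof -
  from C obtain y where y: "C = wrel A `` {y}" unfolding wc_def2 by (auto elim: quotientE)
  with x have "(y,x) \<in> wrel A" by simp
  hence "wrel A `` {y} = wrel A `` {x}" by (rule equiv_class_eq[OF equiv_wrel])
  thus ?thesis using y by simp
qed

lemma und_wrel: "und A x y \<Longrightarrow> (x,y) \<in> wrel A"
  unfolding und_def wrel_def by auto

lemma und_in_comp: "C \<in> weak_components A \<Longrightarrow> x \<in> C \<Longrightarrow> und A x y \<Longrightarrow> y \<in> C"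
  using comp_mem[of C A x] und_wrel[of A x y] by auto

lemma comp_closed:
  assumes C: "C \<in> weak_components A" and S: "S \<subseteq> C" "x \<in> S"
    and cl: "\<And>a b. a \<in> S \<Longrightarrow> und A a b \<Longrightarrow> b \<in> S"
  shows "S = C"
proof
  show "C \<subseteq> S"
  proof
    fix y assume "y \<in> C"
    hence "(x,y) \<in> (A \<union> A\<inverse>)\<^sup>*" using comp_mem[OF C, of x] S by (auto simp: wrel_def)
    thus "y \<in> S"
    proof (induction rule: rtrancl_induct)
      case base thus ?case using S by simp
    next
      case (step y z)
      hence "und A y z" by (auto simp: und_def)
      thus ?case using cl step by blast
    qed
  qed
qed (rule S)

lemma comp_nonempty: "C \<in> weak_components A \<Longrightarrow> C \<noteq> {}"
  unfolding wc_def2 by (metis equiv_wrel in_quotient_imp_non_empty)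

lemma sum_over_comps:
  fixes A :: "('n::finite \<times> 'n) set"
  shows "(\<Sum>u\<in>UNIV. \<phi> u) = (\<Sum>C\<in>weak_components A. \<Sum>u\<in>C. \<phi> u)"
proof -
  have "UNIV = \<Union>(weak_components A)" unfolding wc_def2 by (rule Union_quotient[OF equiv_wrel, symmetric])
  hence "(\<Sum>u\<in>UNIV. \<phi> u) = (\<Sum>u\<in>\<Union>(weak_components A). \<phi> u)" by simp
  also have "\<dots> = (\<Sum>C\<in>weak_components A. \<Sum>u\<in>C. \<phi> u)"
    using sum.Union_disjoint[of "weak_components A" \<phi>] 
    by (auto simp: wc_def2 dest: quotient_disj[OF equiv_wrel])
  finally show ?thesis .
qed

lemma finite_wc: "finite (weak_components (A :: ('n::finite \<times> 'n) set))"
  by simp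

lemma row_in_comp:
  fixes A :: "('n::finite \<times> 'n) set"
  assumes C: "C \<in> weak_components A" and u: "u \<in> C"
  shows "(herm A *v v) $ u = (\<Sum>x\<in>C. hh A u x * v $ x)"
  unfolding mv_nth
  by (rule sum.mono_neutral_right) (auto simp: hh_zero intro: und_in_comp[OF C u])

lemma cmod_add_sq: "(cmod (u + v))^2 = (cmod u)^2 + (cmod v)^2 + 2 * Re (cnj u * v)"
  unfolding cmod_power2 by (simp add: power2_eq_square algebra_simps)

lemma two_rows:
  "(cmod (a*x + b*y))^2 + (cmod (c*x + d*y))^2 =
   ((cmod a)^2 + (cmod c)^2) * (cmod x)^2 + ((cmod b)^2 + (cmod d)^2) * (cmod y)^2
   + 2 * Re (cnj x * y * (cnj a * b + cnj c * d))"
proof -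
  have e: "cnj (a1*a2) * (a3*a4) = cnj a2 * a4 * (cnj a1 * a3)" for a1 a2 a3 a4 :: complex
    by (simp add: algebra_simps)
  show ?thesis
    unfolding cmod_add_sq e distrib_left plus_complex.sel(1) norm_mult power_mult_distrib
    by (simp add: algebra_simps)
qed

definition c4frame :: "('a \<times> 'a) set \<Rightarrow> 'a \<Rightarrow> 'a \<Rightarrow> 'a \<Rightarrow> 'a \<Rightarrow> bool" where
  "c4frame A v0 v1 v2 v3 \<longleftrightarrow> distinct [v0,v1,v2,v3] \<and> und A v0 v1 \<and> und A v1 v2 \<and> und A v2 v3
     \<and> und A v3 v0 \<and> \<not> und A v0 v2 \<and> \<not> und A v1 v3"

definition omega :: "('n::finite \<times> 'n) set \<Rightarrow> 'n \<Rightarrow> 'n \<Rightarrow> 'n \<Rightarrow> 'n \<Rightarrow> complex" where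
  "omega A v0 v1 v2 v3 = hh A v0 v1 * hh A v1 v2 * hh A v2 v3 * hh A v3 v0"

lemma cycle_norm:
  fixes A :: "('n::finite \<times> 'n) set"
  assumes irr: "\<forall>x. (x,x) \<notin> A" and fr: "c4frame A v0 v1 v2 v3" and om: "omega A v0 v1 v2 v3 = -1"
  shows "(\<Sum>u\<in>{v0,v1,v2,v3}. (cmod (\<Sum>x\<in>{v0,v1,v2,v3}. hh A u x * v $ x))^2)
       = 2 * (\<Sum>u\<in>{v0,v1,v2,v3}. (cmod (v $ u))^2)"
proof -
  have d: "v0 \<noteq> v1" "v0 \<noteq> v2" "v0 \<noteq> v3" "v1 \<noteq> v2" "v1 \<noteq> v3" "v2 \<noteq> v3"
    using fr by (auto simp: c4frame_def)
  have dg: "hh A x x = 0" for x using irr by (simp add: hh_def)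
  have z: "hh A v0 v2 = 0" "hh A v2 v0 = 0" "hh A v1 v3 = 0" "hh A v3 v1 = 0"
    using fr by (auto simp: c4frame_def hh_zero und_sym)
  have U: "und A v0 v1" "und A v1 v2" "und A v2 v3" "und A v3 v0"
    using fr by (auto simp: c4frame_def)
  have m: "cmod (hh A a b) = 1" if "und A a b" for a b using that by (simp add: hh_cmod)
  have m2: "cmod (hh A a b) = 1" if "und A b a" for a b using that by (simp add: hh_cmod und_sym)
  have p: "hh A a b * hh A b a = 1" if "und A a b" for a b using hh_mult_cnj[OF that] .
  have cj: "cnj (hh A a b) = hh A b a" for a b by (simp add: hh_cnj[of A b a])
  let ?h01 = "hh A v0 v1" and ?h10 = "hh A v1 v0" and ?h12 = "hh A v1 v2" and ?h21 = "hh A v2 v1"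
  let ?h23 = "hh A v2 v3" and ?h32 = "hh A v3 v2" and ?h30 = "hh A v3 v0" and ?h03 = "hh A v0 v3"
  have w: "?h01 * ?h12 * ?h23 * ?h30 = -1" using om by (simp add: omega_def)
  have c1: "?h10 * ?h03 + ?h12 * ?h23 = 0"
  proof -
    have "?h01 * ?h30 * (?h10 * ?h03 + ?h12 * ?h23) = (?h01 * ?h10) * (?h30 * ?h03) + ?h01 * ?h12 * ?h23 * ?h30"
      by (simp add: algebra_simps)
    also have "\<dots> = 0" using p[OF U(1)] p[OF U(4)] w by simp
    finally have "?h01 * ?h30 * (?h10 * ?h03 + ?h12 * ?h23) = 0" .
    moreover have "?h01 \<noteq> 0" "?h30 \<noteq> 0" using U by (auto simp: hh_zero)
    ultimately show ?thesis by simp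
  qed
  have c2: "?h01 * ?h12 + ?h03 * ?h32 = 0"
  proof -
    have "?h23 * ?h30 * (?h01 * ?h12 + ?h03 * ?h32) = ?h01 * ?h12 * ?h23 * ?h30 + (?h23 * ?h32) * (?h30 * ?h03)"
      by (simp add: algebra_simps)
    also have "\<dots> = 0" using p[OF U(3)] p[OF U(4)] w by simp
    finally have "?h23 * ?h30 * (?h01 * ?h12 + ?h03 * ?h32) = 0" .
    moreover have "?h23 \<noteq> 0" "?h30 \<noteq> 0" using U by (auto simp: hh_zero)
    ultimately show ?thesis by simp
  qed
  have rowsA: "(cmod (?h01 * v$v1 + ?h03 * v$v3))^2 + (cmod (?h21 * v$v1 + ?h23 * v$v3))^2
     = 2 * (cmod (v$v1))^2 + 2 * (cmod (v$v3))^2"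
    unfolding two_rows cj using c1 m[OF U(1)] m2[OF U(4)] m2[OF U(2)] m[OF U(3)] by simp
  have rowsB: "(cmod (?h10 * v$v0 + ?h12 * v$v2))^2 + (cmod (?h30 * v$v0 + ?h32 * v$v2))^2
     = 2 * (cmod (v$v0))^2 + 2 * (cmod (v$v2))^2"
    unfolding two_rows cj using c2 m2[OF U(1)] m[OF U(4)] m[OF U(2)] m2[OF U(3)] by simp
  have r0: "(\<Sum>x\<in>{v0,v1,v2,v3}. hh A v0 x * v$x) = ?h01 * v$v1 + ?h03 * v$v3" using d by (simp add: dg z)
  have r1: "(\<Sum>x\<in>{v0,v1,v2,v3}. hh A v1 x * v$x) = ?h10 * v$v0 + ?h12 * v$v2" using d by (simp add: dg z)
  have r2: "(\<Sum>x\<in>{v0,v1,v2,v3}. hh A v2 x * v$x) = ?h21 * v$v1 + ?h23 * v$v3" using d by (simp add: dg z)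
  have r3: "(\<Sum>x\<in>{v0,v1,v2,v3}. hh A v3 x * v$x) = ?h30 * v$v0 + ?h32 * v$v2" using d by (simp add: dg z)
  have S: "(\<Sum>u\<in>{v0,v1,v2,v3}. g u) = g v0 + g v1 + g v2 + g v3" for g :: "'n \<Rightarrow> real"
    using d by (simp add: add.assoc)
  show ?thesis
    unfolding S r0 r1 r2 r3 using rowsA rowsB by (simp add: algebra_simps)
qed

lemma i_neqs[simp]: "\<i> \<noteq> 1" "- \<i> \<noteq> 1" "\<i> \<noteq> - \<i>" "- \<i> \<noteq> \<i>" "1 \<noteq> \<i>" "1 \<noteq> - \<i>"
  "\<i> \<noteq> - 1" "- \<i> \<noteq> - 1" "- 1 \<noteq> \<i>" "- 1 \<noteq> - \<i>"
  by (simp_all add: complex_eq_iff)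

lemma hh_1_iff: "hh A u v = 1 \<longleftrightarrow> (u,v) \<in> A \<and> (v,u) \<in> A"
  by (simp add: hh_def)
lemma hh_i_iff: "hh A u v = \<i> \<longleftrightarrow> (u,v) \<in> A \<and> (v,u) \<notin> A"
  by (simp add: hh_def)
lemma hh_mi_iff: "hh A u v = - \<i> \<longleftrightarrow> (u,v) \<notin> A \<and> (v,u) \<in> A"
  by (simp add: hh_def)

lemma tilde_intro:
  assumes d: "distinct [p0,p1,p2,p3]" and C: "C = {p0,p1,p2,p3}"
    and a: "(p0,p1) \<in> A" "(p1,p2) \<in> A" "(p2,p3) \<in> A" "(p0,p3) \<in> A"
    and n: "(p1,p0) \<notin> A" "(p2,p1) \<notin> A" "(p3,p2) \<notin> A" "(p3,p0) \<notin> A"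
      "(p0,p2) \<notin> A" "(p2,p0) \<notin> A" "(p1,p3) \<notin> A" "(p3,p1) \<notin> A"
    and irr: "\<forall>x. (x,x) \<notin> A"
  shows "iso_tilde_C4 A C"
  unfolding iso_tilde_C4_def
proof (intro exI conjI)
  let ?xs = "[p0,p1,p2,p3]"
  show "bij_betw ((!) ?xs) {0..<4} C"
    by (rule bij_betw_nth) (use d C in auto)
  have e: "{0..<4::nat} = {0,1,2,3}" by auto
  show "\<forall>i\<in>{0..<4}. \<forall>j\<in>{0..<4}. (?xs ! i, ?xs ! j) \<in> A \<longleftrightarrow> (i, j) \<in> {(0,1),(1,2),(2,3),(0,3)}"
    unfolding e using a n irr by (simp add: eval_nat_numeral)
qed

lemma sc_intro:
  assumes C: "C = {p0,p1,p2,p3}"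
    and a: "(p0,p1) \<in> A" "(p1,p2) \<in> A" "(p2,p3) \<in> A" "(p3,p0) \<in> A"
  shows "strongly_connected_on A C"
proof -
  let ?R = "A \<inter> C \<times> C"
  have s: "(p0,p1) \<in> ?R\<^sup>*" "(p1,p2) \<in> ?R\<^sup>*" "(p2,p3) \<in> ?R\<^sup>*" "(p3,p0) \<in> ?R\<^sup>*"
    using a C by auto
  have to0: "(x,p0) \<in> ?R\<^sup>*" if "x \<in> C" for x
    using that C s by (auto intro: rtrancl_trans)
  have from0: "(p0,y) \<in> ?R\<^sup>*" if "y \<in> C" for y
    using that C s by (auto intro: rtrancl_trans)
  show ?thesis unfolding strongly_connected_on_def
    using to0 from0 by (blast intro: rtrancl_trans)
qed

lemma sc_cut:
  assumes sc: "strongly_connected_on A C" and S: "S \<subseteq> C" "x \<in> S" and y: "y \<in> C" "y \<notin> S"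
  shows "\<exists>a\<in>S. \<exists>b. b \<in> C \<and> b \<notin> S \<and> (a,b) \<in> A"
proof (rule ccontr)
  assume no: "\<not> ?thesis"
  have "(x,y) \<in> (A \<inter> C \<times> C)\<^sup>*" using sc S y unfolding strongly_connected_on_def by blast
  hence "y \<in> S"
  proof (induction rule: rtrancl_induct)
    case base thus ?case using S by simp
  next
    case (step z w) thus ?case using no by blast
  qed
  thus False using y by simp
qed

lemma digons_c4:
  assumes irr: "\<forall>x. (x,x) \<notin> A" and fr: "c4frame A v0 v1 v2 v3"
  shows "digons_on A {v0,v1,v2,v3} =
     (if (v0,v1) \<in> A \<and> (v1,v0) \<in> A then {{v0,v1}} else {}) \<union>
     (if (v1,v2) \<in> A \<and> (v2,v1) \<in> A then {{v1,v2}} else {}) \<union>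
     (if (v2,v3) \<in> A \<and> (v3,v2) \<in> A then {{v2,v3}} else {}) \<union>
     (if (v3,v0) \<in> A \<and> (v0,v3) \<in> A then {{v3,v0}} else {})" (is "?L = ?R")
proof
  have n: "(v0,v2) \<notin> A" "(v2,v0) \<notin> A" "(v1,v3) \<notin> A" "(v3,v1) \<notin> A"
    using fr by (auto simp: c4frame_def und_def)
  show "?L \<subseteq> ?R"
  proof
    fix e assume "e \<in> ?L"
    then obtain x y where e: "e = {x,y}" and xy: "x \<in> {v0,v1,v2,v3}" "y \<in> {v0,v1,v2,v3}"
      "(x,y) \<in> A" "(y,x) \<in> A" unfolding digons_on_def by blast
    from xy(1) have "x = v0 \<or> x = v1 \<or> x = v2 \<or> x = v3" by simp
    moreover from xy(2) have "y = v0 \<or> y = v1 \<or> y = v2 \<or> y = v3" by simp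
    ultimately show "e \<in> ?R" using xy(3,4) n irr unfolding e
      by (elim disjE) (simp_all add: insert_commute)
  qed
  show "?R \<subseteq> ?L" unfolding digons_on_def by (auto split: if_splits)
qed

lemma card_dg:
  assumes "distinct [v0,v1,v2,v3]"
  shows "card ((if P1 then {{v0,v1}} else {}) \<union> (if P2 then {{v1,v2}} else {}) \<union>
     (if P3 then {{v2,v3}} else {}) \<union> (if P4 then {{v3,v0::'a}} else {})) =
     (if P1 then 1 else 0) + (if P2 then 1 else 0) + (if P3 then 1 else 0) + (if P4 then (1::nat) else 0)"
proof -
  have d: "{v0,v1} \<noteq> {v1,v2}" "{v0,v1} \<noteq> {v2,v3}" "{v0,v1} \<noteq> {v3,v0}"
     "{v1,v2} \<noteq> {v2,v3}" "{v1,v2} \<noteq> {v3,v0}" "{v2,v3} \<noteq> {v3,v0}"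
    using assms by (auto simp: doubleton_eq_iff)
  show ?thesis
    by (cases P1; cases P2; cases P3; cases P4) (simp_all add: d d[symmetric] card_insert_if)
qed

lemma core_a:
  fixes A :: "('n::finite \<times> 'n) set"
  assumes irr: "\<forall>x. (x,x) \<notin> A" and fr: "c4frame A v0 v1 v2 v3"
    and e0: "(v0,v1) \<in> A" "(v1,v0) \<notin> A"
    and sc: "strongly_connected_on A {v0,v1,v2,v3}" and cd: "card (digons_on A {v0,v1,v2,v3}) = 2"
  shows "omega A v0 v1 v2 v3 = -1"
proof -
  have d: "distinct [v0,v1,v2,v3]" using fr by (simp add: c4frame_def)
  have n: "(v0,v2) \<notin> A" "(v2,v0) \<notin> A" "(v1,v3) \<notin> A" "(v3,v1) \<notin> A"
    using fr by (auto simp: c4frame_def und_def)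
  have U: "(v1,v2) \<in> A \<or> (v2,v1) \<in> A" "(v2,v3) \<in> A \<or> (v3,v2) \<in> A" "(v3,v0) \<in> A \<or> (v0,v3) \<in> A"
    using fr by (auto simp: c4frame_def und_def)
  have h01: "hh A v0 v1 = \<i>" using e0 by (simp add: hh_def)
  let ?D12 = "(v1,v2) \<in> A \<and> (v2,v1) \<in> A" and ?D23 = "(v2,v3) \<in> A \<and> (v3,v2) \<in> A"
    and ?D30 = "(v3,v0) \<in> A \<and> (v0,v3) \<in> A"
  have "(if ?D12 then 1 else 0) + (if ?D23 then 1 else 0) + (if ?D30 then 1 else (0::nat)) = 2"
    using cd unfolding digons_c4[OF irr fr] card_dg[OF d] using e0 by simp
  hence cs: "(?D12 \<and> ?D23 \<and> \<not> ?D30) \<or> (?D12 \<and> \<not> ?D23 \<and> ?D30) \<or> (\<not> ?D12 \<and> ?D23 \<and> ?D30)"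
    by (auto split: if_splits)
  have C: "{v0,v1,v2,v3} = {v0,v1,v2,v3}" ..
  show ?thesis
  proof -
    { assume a: "?D12" "?D23" "\<not> ?D30"
      have "(v3,v0) \<in> A"
      proof (rule ccontr)
        assume nn: "(v3,v0) \<notin> A"
        from sc_cut[OF sc, of "{v1,v2,v3}" v1 v0] d
        obtain a b where "a \<in> {v1,v2,v3}" "b \<in> {v0,v1,v2,v3}" "b \<notin> {v1,v2,v3}" "(a,b) \<in> A" by auto
        thus False using nn n e0 by auto
      qed
      hence ?thesis using a h01 by (simp add: omega_def hh_def) }
    moreover
    { assume a: "?D12" "\<not> ?D23" "?D30"
      have "(v2,v3) \<in> A"
      proof (rule ccontr)
        assume nn: "(v2,v3) \<notin> A"
        from sc_cut[OF sc, of "{v1,v2}" v1 v0] d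
        obtain a b where "a \<in> {v1,v2}" "b \<in> {v0,v1,v2,v3}" "b \<notin> {v1,v2}" "(a,b) \<in> A" by auto
        thus False using nn n e0 by auto
      qed
      hence ?thesis using a h01 by (simp add: omega_def hh_def) }
    moreover
    { assume a: "\<not> ?D12" "?D23" "?D30"
      have "(v1,v2) \<in> A"
      proof (rule ccontr)
        assume nn: "(v1,v2) \<notin> A"
        from sc_cut[OF sc, of "{v1}" v1 v0] d
        obtain a b where "a \<in> {v1}" "b \<in> {v0,v1,v2,v3}" "b \<notin> {v1}" "(a,b) \<in> A" by auto
        thus False using nn n e0 by auto
      qed
      hence ?thesis using a h01 by (simp add: omega_def hh_def) }
    ultimately show ?thesis using cs by blast
  qed
qed

lemma core_b:
  fixes A :: "('n::finite \<times> 'n) set"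
  assumes irr: "\<forall>x. (x,x) \<notin> A" and fr: "c4frame A v0 v1 v2 v3"
    and e0: "(v0,v1) \<in> A" "(v1,v0) \<notin> A"
    and om: "omega A v0 v1 v2 v3 = -1"
  shows "iso_tilde_C4 A {v0,v1,v2,v3} \<or>
     (strongly_connected_on A {v0,v1,v2,v3} \<and> card (digons_on A {v0,v1,v2,v3}) = 2)"
proof -
  have d: "distinct [v0,v1,v2,v3]" using fr by (simp add: c4frame_def)
  have n: "(v0,v2) \<notin> A" "(v2,v0) \<notin> A" "(v1,v3) \<notin> A" "(v3,v1) \<notin> A"
    using fr by (auto simp: c4frame_def und_def)
  have h01: "hh A v0 v1 = \<i>" using e0 by (simp add: hh_def)
  have m: "hh A v1 v2 = 1 \<or> hh A v1 v2 = \<i> \<or> hh A v1 v2 = - \<i>"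
     "hh A v2 v3 = 1 \<or> hh A v2 v3 = \<i> \<or> hh A v2 v3 = - \<i>"
     "hh A v3 v0 = 1 \<or> hh A v3 v0 = \<i> \<or> hh A v3 v0 = - \<i>"
    using hh_vals[of A v1 v2] hh_vals[of A v2 v3] hh_vals[of A v3 v0] fr by (auto simp: c4frame_def)
  have w: "\<i> * hh A v1 v2 * hh A v2 v3 * hh A v3 v0 = -1" using om h01 by (simp add: omega_def)
  have cs: "(hh A v1 v2 = 1 \<and> hh A v2 v3 = 1 \<and> hh A v3 v0 = \<i>) \<or>
            (hh A v1 v2 = 1 \<and> hh A v2 v3 = \<i> \<and> hh A v3 v0 = 1) \<or>
            (hh A v1 v2 = \<i> \<and> hh A v2 v3 = 1 \<and> hh A v3 v0 = 1) \<or>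
            (hh A v1 v2 = \<i> \<and> hh A v2 v3 = \<i> \<and> hh A v3 v0 = - \<i>) \<or>
            (hh A v1 v2 = \<i> \<and> hh A v2 v3 = - \<i> \<and> hh A v3 v0 = \<i>) \<or>
            (hh A v1 v2 = - \<i> \<and> hh A v2 v3 = \<i> \<and> hh A v3 v0 = \<i>) \<or>
            (hh A v1 v2 = - \<i> \<and> hh A v2 v3 = - \<i> \<and> hh A v3 v0 = - \<i>)"
    using m w by (elim disjE) simp_all
  have sc: "strongly_connected_on A {v0,v1,v2,v3}" if "(v1,v2) \<in> A" "(v2,v3) \<in> A" "(v3,v0) \<in> A"
    by (rule sc_intro[OF refl e0(1) that])
  have cdg: "card (digons_on A {v0,v1,v2,v3}) = (if (v1,v2) \<in> A \<and> (v2,v1) \<in> A then 1 else 0) +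
     (if (v2,v3) \<in> A \<and> (v3,v2) \<in> A then 1 else 0) + (if (v3,v0) \<in> A \<and> (v0,v3) \<in> A then 1 else 0)"
    unfolding digons_c4[OF irr fr] card_dg[OF d] using e0 by simp
  have dd: "distinct [v0,v1,v2,v3]" "distinct [v3,v0,v1,v2]" "distinct [v2,v3,v0,v1]" "distinct [v0,v3,v2,v1]"
    using d by auto
  have S1: "{v0,v1,v2,v3} = {v3,v0,v1,v2}" "{v0,v1,v2,v3} = {v2,v3,v0,v1}" "{v0,v1,v2,v3} = {v0,v3,v2,v1}"
    by auto
  note iffs = hh_1_iff hh_i_iff hh_mi_iff
  show ?thesis
    using cs
  proof (elim disjE conjE)
    assume "hh A v1 v2 = 1" "hh A v2 v3 = 1" "hh A v3 v0 = \<i>"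
    hence b: "(v1,v2) \<in> A" "(v2,v1) \<in> A" "(v2,v3) \<in> A" "(v3,v2) \<in> A" "(v3,v0) \<in> A" "(v0,v3) \<notin> A"
      by (simp_all add: iffs)
    thus ?thesis using sc cdg by simp
  next
    assume "hh A v1 v2 = 1" "hh A v2 v3 = \<i>" "hh A v3 v0 = 1"
    hence b: "(v1,v2) \<in> A" "(v2,v1) \<in> A" "(v2,v3) \<in> A" "(v3,v2) \<notin> A" "(v3,v0) \<in> A" "(v0,v3) \<in> A"
      by (simp_all add: iffs)
    thus ?thesis using sc cdg by simp
  next
    assume "hh A v1 v2 = \<i>" "hh A v2 v3 = 1" "hh A v3 v0 = 1"
    hence b: "(v1,v2) \<in> A" "(v2,v1) \<notin> A" "(v2,v3) \<in> A" "(v3,v2) \<in> A" "(v3,v0) \<in> A" "(v0,v3) \<in> A"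
      by (simp_all add: iffs)
    thus ?thesis using sc cdg by simp
  next
    assume "hh A v1 v2 = \<i>" "hh A v2 v3 = \<i>" "hh A v3 v0 = - \<i>"
    hence b: "(v1,v2) \<in> A" "(v2,v1) \<notin> A" "(v2,v3) \<in> A" "(v3,v2) \<notin> A" "(v3,v0) \<notin> A" "(v0,v3) \<in> A"
      by (simp_all add: iffs)
    have "iso_tilde_C4 A {v0,v1,v2,v3}"
      by (rule tilde_intro[OF dd(1) refl]) (use b e0 n irr in auto)
    thus ?thesis ..
  next
    assume "hh A v1 v2 = \<i>" "hh A v2 v3 = - \<i>" "hh A v3 v0 = \<i>"
    hence b: "(v1,v2) \<in> A" "(v2,v1) \<notin> A" "(v2,v3) \<notin> A" "(v3,v2) \<in> A" "(v3,v0) \<in> A" "(v0,v3) \<notin> A"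
      by (simp_all add: iffs)
    have "iso_tilde_C4 A {v0,v1,v2,v3}"
      by (rule tilde_intro[OF dd(2) S1(1)]) (use b e0 n irr in auto)
    thus ?thesis ..
  next
    assume "hh A v1 v2 = - \<i>" "hh A v2 v3 = \<i>" "hh A v3 v0 = \<i>"
    hence b: "(v1,v2) \<notin> A" "(v2,v1) \<in> A" "(v2,v3) \<in> A" "(v3,v2) \<notin> A" "(v3,v0) \<in> A" "(v0,v3) \<notin> A"
      by (simp_all add: iffs)
    have "iso_tilde_C4 A {v0,v1,v2,v3}"
      by (rule tilde_intro[OF dd(3) S1(2)]) (use b e0 n irr in auto)
    thus ?thesis ..
  next
    assume "hh A v1 v2 = - \<i>" "hh A v2 v3 = - \<i>" "hh A v3 v0 = - \<i>"
    hence b: "(v1,v2) \<notin> A" "(v2,v1) \<in> A" "(v2,v3) \<notin> A" "(v3,v2) \<in> A" "(v3,v0) \<notin> A" "(v0,v3) \<in> A"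
      by (simp_all add: iffs)
    have "iso_tilde_C4 A {v0,v1,v2,v3}"
      by (rule tilde_intro[OF dd(4) S1(3)]) (use b e0 n irr in auto)
    thus ?thesis ..
  qed
qed

definition QP :: "('n::finite \<times> 'n) set \<Rightarrow> 'n \<Rightarrow> 'n \<Rightarrow> 'n \<Rightarrow> 'n \<Rightarrow> bool" where
  "QP A a b c d \<longleftrightarrow>
    (strongly_connected_on A {a,b,c,d} \<and> card (digons_on A {a,b,c,d}) = 2 \<longrightarrow> omega A a b c d = -1) \<and>
    (omega A a b c d = -1 \<longrightarrow> iso_tilde_C4 A {a,b,c,d} \<or>
       (strongly_connected_on A {a,b,c,d} \<and> card (digons_on A {a,b,c,d}) = 2))"

lemma cnj_hh: "cnj (hh A u v) = hh A v u" by (simp add: hh_cnj[of A v u])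

lemma QP_rot: "QP A b c d a = QP A a b c d"
proof -
  have "{b,c,d,a} = {a,b,c,d}" by auto
  moreover have "omega A b c d a = omega A a b c d" by (simp add: omega_def mult_ac)
  ultimately show ?thesis by (simp add: QP_def)
qed

lemma QP_rev: "QP A d c b a = QP A a b c d"
proof -
  have "{d,c,b,a} = {a,b,c,d}" by auto
  moreover have "omega A d c b a = cnj (omega A a b c d)"
    by (simp add: omega_def cnj_hh mult_ac)
  moreover have "cnj z = -1 \<longleftrightarrow> z = -1" for z :: complex by (metis complex_cnj_cnj complex_cnj_minus complex_cnj_one)
  ultimately show ?thesis by (simp add: QP_def)
qed

lemma frame_rot: "c4frame A a b c d \<Longrightarrow> c4frame A b c d a"
  unfolding c4frame_def using und_sym[of A a c] by auto

lemma frame_rev: "c4frame A a b c d \<Longrightarrow> c4frame A d c b a"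
  unfolding c4frame_def using und_sym[of A a b] und_sym[of A b c] und_sym[of A c d] und_sym[of A d a]
    und_sym[of A a c] und_sym[of A b d] by auto

lemma QP_core:
  fixes A :: "('n::finite \<times> 'n) set"
  assumes irr: "\<forall>x. (x,x) \<notin> A" and fr: "c4frame A v0 v1 v2 v3"
    and e0: "(v0,v1) \<in> A" "(v1,v0) \<notin> A"
  shows "QP A v0 v1 v2 v3"
  unfolding QP_def using core_a[OF irr fr e0] core_b[OF irr fr e0] by blast

lemma QP_all:
  fixes A :: "('n::finite \<times> 'n) set"
  assumes irr: "\<forall>x. (x,x) \<notin> A" and fr: "c4frame A v0 v1 v2 v3"
  shows "QP A v0 v1 v2 v3"
proof -
  have f1: "c4frame A v1 v2 v3 v0" using frame_rot[OF fr] .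
  have f2: "c4frame A v2 v3 v0 v1" using frame_rot[OF f1] .
  have f3: "c4frame A v3 v0 v1 v2" using frame_rot[OF f2] .
  have r0: "c4frame A v3 v2 v1 v0" using frame_rev[OF fr] .
  have r1: "c4frame A v0 v3 v2 v1" using frame_rev[OF f1] .
  have r2: "c4frame A v1 v0 v3 v2" using frame_rev[OF f2] .
  have r3: "c4frame A v2 v1 v0 v3" using frame_rev[OF f3] .
  have q1: "QP A v1 v2 v3 v0 = QP A v0 v1 v2 v3" by (rule QP_rot)
  have q2: "QP A v2 v3 v0 v1 = QP A v0 v1 v2 v3" using QP_rot[of A v2 v3 v0 v1] q1 by simp
  have q3: "QP A v3 v0 v1 v2 = QP A v0 v1 v2 v3" using QP_rot[of A v3 v0 v1 v2] q2 by simp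
  have p0: "QP A v3 v2 v1 v0 = QP A v0 v1 v2 v3" by (rule QP_rev)
  have p1: "QP A v0 v3 v2 v1 = QP A v0 v1 v2 v3" using QP_rev[of A v0 v3 v2 v1] q1 by simp
  have p2: "QP A v1 v0 v3 v2 = QP A v0 v1 v2 v3" using QP_rev[of A v1 v0 v3 v2] q2 by simp
  have p3: "QP A v2 v1 v0 v3 = QP A v0 v1 v2 v3" using QP_rev[of A v2 v1 v0 v3] q3 by simp
  have U: "und A v0 v1" "und A v1 v2" "und A v2 v3" "und A v3 v0" using fr by (auto simp: c4frame_def)
  show ?thesis
  proof (cases "(v0,v1) \<in> A \<and> (v1,v0) \<in> A \<and> (v1,v2) \<in> A \<and> (v2,v1) \<in> A \<and>
                (v2,v3) \<in> A \<and> (v3,v2) \<in> A \<and> (v3,v0) \<in> A \<and> (v0,v3) \<in> A")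
    case True
    hence "omega A v0 v1 v2 v3 = 1" by (simp add: omega_def hh_def)
    moreover have "card (digons_on A {v0,v1,v2,v3}) = 4"
      using True unfolding digons_c4[OF irr fr] card_dg[OF conjunct1[OF fr[unfolded c4frame_def]]] by simp
    ultimately show ?thesis by (simp add: QP_def)
  next
    case False
    hence "((v0,v1) \<in> A \<and> (v1,v0) \<notin> A) \<or> ((v1,v0) \<in> A \<and> (v0,v1) \<notin> A) \<or>
           ((v1,v2) \<in> A \<and> (v2,v1) \<notin> A) \<or> ((v2,v1) \<in> A \<and> (v1,v2) \<notin> A) \<or>
           ((v2,v3) \<in> A \<and> (v3,v2) \<notin> A) \<or> ((v3,v2) \<in> A \<and> (v2,v3) \<notin> A) \<or>
           ((v3,v0) \<in> A \<and> (v0,v3) \<notin> A) \<or> ((v0,v3) \<in> A \<and> (v3,v0) \<notin> A)"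
      using U unfolding und_def by blast
    thus ?thesis
    proof (elim disjE conjE)
      assume "(v0,v1) \<in> A" "(v1,v0) \<notin> A" thus ?thesis using QP_core[OF irr fr] by blast
    next
      assume "(v1,v0) \<in> A" "(v0,v1) \<notin> A" thus ?thesis using QP_core[OF irr r2] p2 by blast
    next
      assume "(v1,v2) \<in> A" "(v2,v1) \<notin> A" thus ?thesis using QP_core[OF irr f1] q1 by blast
    next
      assume "(v2,v1) \<in> A" "(v1,v2) \<notin> A" thus ?thesis using QP_core[OF irr r3] p3 by blast
    next
      assume "(v2,v3) \<in> A" "(v3,v2) \<notin> A" thus ?thesis using QP_core[OF irr f2] q2 by blast
    next
      assume "(v3,v2) \<in> A" "(v2,v3) \<notin> A" thus ?thesis using QP_core[OF irr r0] p0 by blast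
    next
      assume "(v3,v0) \<in> A" "(v0,v3) \<notin> A" thus ?thesis using QP_core[OF irr f3] q3 by blast
    next
      assume "(v0,v3) \<in> A" "(v3,v0) \<notin> A" thus ?thesis using QP_core[OF irr r1] p1 by blast
    qed
  qed
qed

definition FF :: "('n::finite \<times> 'n) set \<Rightarrow> 'n set \<Rightarrow> complex^'n \<Rightarrow> real" where
  "FF A C v = (\<Sum>u\<in>C. (cmod (\<Sum>x\<in>C. hh A u x * v $ x))^2)"
definition NN :: "'n set \<Rightarrow> complex^'n \<Rightarrow> real" where
  "NN C v = (\<Sum>u\<in>C. (cmod (v $ u))^2)"

definition good :: "('n \<times> 'n) set \<Rightarrow> 'n set \<Rightarrow> bool" where
  "good A C \<longleftrightarrow> (\<exists>k \<le> 3. und_iso_path A C k)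
      \<or> (und_iso_C4 A C \<and> (iso_tilde_C4 A C \<or> (strongly_connected_on A C \<and> card (digons_on A C) = 2)))"

lemma pad4:
  assumes "k \<le> (3::nat)"
  shows "(\<Sum>i\<in>{0..k}. \<phi> i) = (\<Sum>i<4. (if i \<le> k then \<phi> i else (0::'a::comm_monoid_add)))"
proof -
  have e: "{..<4} \<inter> {i. i \<le> k} = {0..k}" using assms by auto
  show ?thesis using sum.inter_restrict[of "{..<4}" \<phi> "{i. i \<le> k}"] unfolding e by simp
qed

lemma four_set: "{0..<4::nat} = {0,1,2,3}" by auto

lemma bij4:
  assumes "bij_betw f {0..<4::nat} C"
  shows "C = {f 0, f 1, f 2, f 3}" "distinct [f 0, f 1, f 2, f 3]"
proof -
  show "C = {f 0, f 1, f 2, f 3}" using bij_betw_imp_surj_on[OF assms] by (auto simp: four_set)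
  have "inj_on f {0,1,2,3}" using bij_betw_imp_inj_on[OF assms] by (simp add: four_set)
  thus "distinct [f 0, f 1, f 2, f 3]" by (auto simp: inj_on_def)
qed

lemma NN_pos: "u \<in> C \<Longrightarrow> v $ u \<noteq> 0 \<Longrightarrow> finite C \<Longrightarrow> NN C v > 0"
  unfolding NN_def by (rule sum_pos2[where i=u]) auto

lemma comp_bound_path:
  fixes A :: "('n::finite \<times> 'n) set"
  assumes k: "k \<le> 3" and P: "und_iso_path A C k"
  shows "FF A C v \<le> 3 * NN C v \<and> ((\<exists>u\<in>C. v $ u \<noteq> 0) \<longrightarrow> FF A C v < 3 * NN C v)"
proof -
  obtain f where bij: "bij_betw f {0..k} C"
    and adj: "\<forall>i\<in>{0..k}. \<forall>j\<in>{0..k}. und A (f i) (f j) \<longleftrightarrow> (i = j + 1 \<or> j = i + 1)"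
    using P unfolding und_iso_path_def by blast
  define g where "g i j = (if i \<le> k \<and> j \<le> k then hh A (f i) (f j) else 0)" for i j
  define y where "y j = (if j \<le> k then v $ f j else 0)" for j
  have inner: "(\<Sum>x\<in>C. hh A (f i) x * v $ x) = (\<Sum>j<4. g i j * y j)" if "i \<le> k" for i
  proof -
    have "(\<Sum>x\<in>C. hh A (f i) x * v $ x) = (\<Sum>j\<in>{0..k}. hh A (f i) (f j) * v $ f j)"
      using sum.reindex_bij_betw[OF bij, of "\<lambda>x. hh A (f i) x * v $ x"] by simp
    also have "\<dots> = (\<Sum>j<4. g i j * y j)" unfolding pad4[OF k] using that
      by (intro sum.cong) (auto simp: g_def y_def)
    finally show ?thesis .
  qed
  have F: "FF A C v = (\<Sum>i<4. (cmod (\<Sum>j<4. g i j * y j))^2)"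
  proof -
    have "FF A C v = (\<Sum>i\<in>{0..k}. (cmod (\<Sum>x\<in>C. hh A (f i) x * v $ x))^2)"
      unfolding FF_def using sum.reindex_bij_betw[OF bij, of "\<lambda>u. (cmod (\<Sum>x\<in>C. hh A u x * v $ x))^2"] by simp
    also have "\<dots> = (\<Sum>i<4. (cmod (\<Sum>j<4. g i j * y j))^2)" unfolding pad4[OF k]
      by (intro sum.cong) (auto simp: inner g_def)
    finally show ?thesis .
  qed
  have N: "NN C v = (\<Sum>j<4. (cmod (y j))^2)"
  proof -
    have "NN C v = (\<Sum>i\<in>{0..k}. (cmod (v $ f i))^2)"
      unfolding NN_def using sum.reindex_bij_betw[OF bij, of "\<lambda>u. (cmod (v $ u))^2"] by simp
    also have "\<dots> = (\<Sum>j<4. (cmod (y j))^2)" unfolding pad4[OF k]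
      by (intro sum.cong) (auto simp: y_def)
    finally show ?thesis .
  qed
  have gb: "cmod (g i j) \<le> (if i = j+1 \<or> j = i+1 then 1 else 0)" if "i<4" "j<4" for i j
  proof (cases "i \<le> k \<and> j \<le> k")
    case True
    hence "und A (f i) (f j) \<longleftrightarrow> (i = j + 1 \<or> j = i + 1)" using adj by auto
    thus ?thesis using True by (simp add: g_def hh_cmod)
  next
    case False
    hence "g i j = 0" unfolding g_def by meson
    thus ?thesis by simp
  qed
  note pp = path4_strict[OF gb]
  show ?thesis
  proof (intro conjI impI)
    show "FF A C v \<le> 3 * NN C v" unfolding F N by (rule pp(1))
    assume "\<exists>u\<in>C. v $ u \<noteq> 0"
    then obtain u where u: "u \<in> C" "v $ u \<noteq> 0" by blast
    then obtain j where j: "j \<in> {0..k}" "u = f j" using bij_betw_imp_surj_on[OF bij] by blast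
    have "\<exists>j<4. y j \<noteq> 0" using j u k by (intro exI[of _ j]) (auto simp: y_def)
    thus "FF A C v < 3 * NN C v" unfolding F N using pp(2) by blast
  qed
qed

lemma comp_bound_cycle:
  fixes A :: "('n::finite \<times> 'n) set"
  assumes irr: "\<forall>x. (x,x) \<notin> A" and fr: "c4frame A v0 v1 v2 v3" and om: "omega A v0 v1 v2 v3 = -1"
    and C: "C = {v0,v1,v2,v3}"
  shows "FF A C v \<le> 3 * NN C v \<and> ((\<exists>u\<in>C. v $ u \<noteq> 0) \<longrightarrow> FF A C v < 3 * NN C v)"
proof -
  have e: "FF A C v = 2 * NN C v" unfolding FF_def NN_def C by (rule cycle_norm[OF irr fr om])
  have n0: "NN C v \<ge> 0" unfolding NN_def by (simp add: sum_nonneg)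
  have fC: "finite C" unfolding C by simp
  have "NN C v > 0" if "\<exists>u\<in>C. v $ u \<noteq> 0"
  proof -
    from that obtain u where "u \<in> C" "v $ u \<noteq> 0" by blast
    thus ?thesis using NN_pos fC by blast
  qed
  thus ?thesis unfolding e using n0 by linarith
qed


lemma comp_bound_tilde:
  fixes A :: "('n::finite \<times> 'n) set"
  assumes irr: "\<forall>x. (x,x) \<notin> A" and t: "iso_tilde_C4 A C"
  shows "FF A C v \<le> 3 * NN C v \<and> ((\<exists>u\<in>C. v $ u \<noteq> 0) \<longrightarrow> FF A C v < 3 * NN C v)"
proof -
  obtain f where bij: "bij_betw f {0..<4} C"
    and ar: "\<forall>i\<in>{0..<4}. \<forall>j\<in>{0..<4}. (f i, f j) \<in> A \<longleftrightarrow> (i, j) \<in> {(0::nat,1::nat),(1,2),(2,3),(0,3)}"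
    using t unfolding iso_tilde_C4_def by blast
  have p: "(f 0, f 1) \<in> A" "(f 1, f 2) \<in> A" "(f 2, f 3) \<in> A" "(f 0, f 3) \<in> A"
    using ar by simp_all
  have q: "(f 1, f 0) \<notin> A" "(f 2, f 1) \<notin> A" "(f 3, f 2) \<notin> A" "(f 3, f 0) \<notin> A"
     "(f 0, f 2) \<notin> A" "(f 2, f 0) \<notin> A" "(f 1, f 3) \<notin> A" "(f 3, f 1) \<notin> A"
    using ar by simp_all
  have fr: "c4frame A (f 0) (f 1) (f 2) (f 3)"
    unfolding c4frame_def und_def using bij4(2)[OF bij] p q by simp
  have om: "omega A (f 0) (f 1) (f 2) (f 3) = -1"
    unfolding omega_def hh_def using p q by simp
  show ?thesis by (rule comp_bound_cycle[OF irr fr om bij4(1)[OF bij]])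
qed

lemma comp_bound_sc:
  fixes A :: "('n::finite \<times> 'n) set"
  assumes irr: "\<forall>x. (x,x) \<notin> A" and u: "und_iso_C4 A C" and sc: "strongly_connected_on A C"
    and cd: "card (digons_on A C) = 2"
  shows "FF A C v \<le> 3 * NN C v \<and> ((\<exists>u\<in>C. v $ u \<noteq> 0) \<longrightarrow> FF A C v < 3 * NN C v)"
proof -
  obtain f where bij: "bij_betw f {0..<4} C"
    and ar: "\<forall>i\<in>{0..<4}. \<forall>j\<in>{0..<4::nat}. und A (f i) (f j) \<longleftrightarrow> (j = (i + 1) mod 4 \<or> i = (j + 1) mod 4)"
    using u unfolding und_iso_C4_def by blast
  have p: "und A (f 0) (f 1)" "und A (f 1) (f 2)" "und A (f 2) (f 3)" "und A (f 3) (f 0)"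
    "\<not> und A (f 0) (f 2)" "\<not> und A (f 1) (f 3)"
    using ar by simp_all
  have fr: "c4frame A (f 0) (f 1) (f 2) (f 3)"
    unfolding c4frame_def using bij4(2)[OF bij] p by simp
  have C: "C = {f 0, f 1, f 2, f 3}" by (rule bij4(1)[OF bij])
  have "QP A (f 0) (f 1) (f 2) (f 3)" by (rule QP_all[OF irr fr])
  hence "strongly_connected_on A C \<and> card (digons_on A C) = 2 \<longrightarrow> omega A (f 0) (f 1) (f 2) (f 3) = -1"
    unfolding QP_def C by (rule conjunct1)
  hence om: "omega A (f 0) (f 1) (f 2) (f 3) = -1" using sc cd by blast
  show ?thesis by (rule comp_bound_cycle[OF irr fr om C])
qed

lemma comp_bound:
  fixes A :: "('n::finite \<times> 'n) set"
  assumes irr: "\<forall>x. (x,x) \<notin> A" and g: "good A C"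
  shows "FF A C v \<le> 3 * NN C v \<and> ((\<exists>u\<in>C. v $ u \<noteq> 0) \<longrightarrow> FF A C v < 3 * NN C v)"
proof -
  from g have "(\<exists>k \<le> 3. und_iso_path A C k) \<or> (und_iso_C4 A C \<and> (iso_tilde_C4 A C \<or>
      (strongly_connected_on A C \<and> card (digons_on A C) = 2)))" by (simp only: good_def)
  thus ?thesis
  proof (elim disjE conjE exE)
    fix k assume "k \<le> 3" "und_iso_path A C k" thus ?thesis by (rule comp_bound_path)
  next
    assume "iso_tilde_C4 A C" thus ?thesis by (rule comp_bound_tilde[OF irr])
  next
    assume "und_iso_C4 A C" "strongly_connected_on A C" "card (digons_on A C) = 2"
    thus ?thesis by (rule comp_bound_sc[OF irr])
  qed
qed

lemma mv_scalar: "M *v (c *s x) = c *s (M *v (x::complex^'n))"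
  for M :: "complex^'n^'m"
  by (simp add: vec_eq_iff mv_nth vector_scalar_mult_def sum_distrib_left mult_ac)

lemma inner_scalar: "inner (a *s x) (b *s x) = Re (cnj a * b) * (norm (x::complex^'n))^2"
proof -
  have "inner (a *s x) (b *s x) = (\<Sum>i\<in>UNIV. Re (cnj a * b) * (cmod (x$i))^2)"
    unfolding inner_vec_sum
  proof (intro sum.cong refl)
    fix i
    have "cnj ((a *s x) $ i) * (b *s x) $ i = (cnj a * b) * (cnj (x$i) * x$i)"
      by (simp add: mult_ac)
    also have "cnj (x$i) * x$i = complex_of_real ((cmod (x$i))^2)"
      by (subst complex_norm_square) (rule mult.commute)
    finally have e: "cnj ((a *s x) $ i) * (b *s x) $ i = (cnj a * b) * complex_of_real ((cmod (x$i))^2)" .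
    have r: "Re (z * complex_of_real t) = Re z * t" for z t by simp
    show "Re (cnj ((a *s x) $ i) * (b *s x) $ i) = Re (cnj a * b) * (cmod (x$i))^2"
      unfolding e r ..
  qed
  thus ?thesis by (simp add: norm_sq_vec sum_distrib_left)
qed

lemma norm_scalar_sq: "(norm (c *s (x::complex^'n)))^2 = (cmod c)^2 * (norm x)^2"
  by (simp add: norm_sq_vec sum_distrib_left norm_mult power_mult_distrib)

lemma norm_bound_all:
  fixes A :: "('n::finite \<times> 'n) set"
  assumes irr: "\<forall>x. (x,x) \<notin> A" and g: "\<forall>C\<in>weak_components A. good A C" and v: "v \<noteq> 0"
  shows "(norm (herm A *v v))^2 < 3 * (norm v)^2"
proof -
  have L: "(norm (herm A *v v))^2 = (\<Sum>C\<in>weak_components A. FF A C v)"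
    unfolding norm_sq_vec sum_over_comps[of _ A] FF_def
    by (intro sum.cong refl) (simp add: row_in_comp)
  have R: "(norm v)^2 = (\<Sum>C\<in>weak_components A. NN C v)"
    unfolding norm_sq_vec sum_over_comps[of _ A] NN_def ..
  obtain u where u: "v $ u \<noteq> 0" using v by (auto simp: vec_eq_iff)
  have C0: "wrel A `` {u} \<in> weak_components A" unfolding wc_def2 by (rule quotientI) simp
  have uC: "u \<in> wrel A `` {u}" by (simp add: wrel_def)
  have "(\<Sum>C\<in>weak_components A. FF A C v) < (\<Sum>C\<in>weak_components A. 3 * NN C v)"
  proof (rule sum_strict_mono_ex1)
    show "finite (weak_components A)" by simp
    show "\<forall>C\<in>weak_components A. FF A C v \<le> 3 * NN C v" using comp_bound[OF irr] g by blast
    show "\<exists>C\<in>weak_components A. FF A C v < 3 * NN C v"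
      using comp_bound[OF irr, of "wrel A `` {u}" v] g C0 uC u by blast
  qed
  thus ?thesis unfolding L R by (simp add: sum_distrib_left)
qed

lemma if_dir:
  fixes A :: "('n::finite \<times> 'n) set"
  assumes irr: "\<forall>x. (x,x) \<notin> A" and g: "\<forall>C\<in>weak_components A. good A C"
  shows "\<forall>l. mat_eigenvalue (herm A) l \<longrightarrow> (\<exists>r::real. l = complex_of_real r \<and> - sqrt 3 < r \<and> r < sqrt 3)"
proof (intro allI impI)
  fix l assume "mat_eigenvalue (herm A) l"
  then obtain v where v: "v \<noteq> 0" and ev: "herm A *v v = l *s v" unfolding mat_eigenvalue_def by blast
  have nv: "(norm v)^2 > 0" using v by simp
  have "inner (herm A *v v) (\<i> *s v) = inner v (herm A *v (\<i> *s v))" by (rule herm_sym)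
  hence "inner (l *s v) (\<i> *s v) = inner (1 *s v) ((\<i> * l) *s v)"
    by (simp add: mv_scalar ev vector_smult_assoc)
  hence "Re (cnj l * \<i>) * (norm v)^2 = Re (cnj 1 * (\<i> * l)) * (norm v)^2"
    unfolding inner_scalar .
  hence "Re (cnj l * \<i>) = Re (\<i> * l)" using nv by simp
  hence im: "Im l = 0" by simp
  have "(norm (l *s v))^2 < 3 * (norm v)^2" using norm_bound_all[OF irr g v] ev by simp
  hence "(cmod l)^2 < 3" using nv unfolding norm_scalar_sq by simp
  hence r2: "(Re l)^2 < 3" using im by (simp add: cmod_power2)
  have "\<bar>Re l\<bar> < sqrt 3" using r2 by (metis real_sqrt_abs real_sqrt_less_iff)
  moreover have "l = complex_of_real (Re l)" using im by (simp add: complex_eq_iff)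
  ultimately show "\<exists>r::real. l = complex_of_real r \<and> - sqrt 3 < r \<and> r < sqrt 3" by auto
qed

definition nb :: "('n \<times> 'n) set \<Rightarrow> 'n \<Rightarrow> 'n set" where
  "nb A u = {v. und A u v}"

definition badw :: "('n::finite \<times> 'n) set \<Rightarrow> bool" where
  "badw A \<longleftrightarrow> (\<exists>w. w \<noteq> 0 \<and> (norm (herm A *v w))^2 \<ge> 3 * (norm w)^2)"

lemma deg_sum: "(\<Sum>u\<in>UNIV. (cmod (hh A u b))^2) = real (card (nb A (b::'n::finite)))"
proof -
  have "(\<Sum>u\<in>UNIV. (cmod (hh A u b))^2) = (\<Sum>u\<in>UNIV. if u \<in> nb A b then 1 else 0)"
    by (intro sum.cong refl) (simp add: hh_cmod nb_def und_sym)
  also have "\<dots> = real (card (nb A b))"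
    by (simp add: sum.If_cases)
  finally show ?thesis .
qed

lemma axis_nth: "axis k x $ i = (if i = k then x else 0)"
  by (simp add: axis_def)

lemma W1:
  fixes A :: "('n::finite \<times> 'n) set"
  assumes "card (nb A u) \<ge> 3"
  shows "badw A"
proof -
  define w :: "complex^'n" where "w = axis u 1"
  have Hw: "(herm A *v w) $ x = hh A x u" for x
    unfolding mv_nth w_def axis_nth by (simp add: if_distrib cong: if_cong)
  have "(norm (herm A *v w))^2 = real (card (nb A u))"
    unfolding norm_sq_vec Hw deg_sum ..
  moreover have "(norm w)^2 = 1"
  proof -
    have "(norm w)^2 = (\<Sum>i\<in>UNIV. if i = u then 1 else (0::real))"
      unfolding norm_sq_vec w_def axis_nth by (intro sum.cong refl) simp
    thus ?thesis by simp
  qed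
  moreover have "w \<noteq> 0" unfolding w_def by (simp add: axis_eq_0_iff)
  ultimately show ?thesis unfolding badw_def using assms by (intro exI[of _ w]) simp
qed

lemma W2:
  fixes A :: "('n::finite \<times> 'n) set"
  assumes bd: "b \<noteq> d"
    and big: "real (card (nb A b)) + real (card (nb A d)) + 2 * cmod (\<Sum>u\<in>UNIV. cnj (hh A u b) * hh A u d) \<ge> 6"
  shows "badw A"
proof -
  define S where "S = (\<Sum>u\<in>UNIV. cnj (hh A u b) * hh A u d)"
  define z where "z = (if S = 0 then 1 else cnj S / complex_of_real (cmod S))"
  have z1: "cmod z = 1" by (simp add: z_def norm_divide)
  have zS: "Re (z * S) = cmod S"
  proof (cases "S = 0")
    case False
    have cs: "cnj S * S = complex_of_real ((cmod S)^2)"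
      by (subst complex_norm_square) (rule mult.commute)
    have "z * S = (cnj S * S) / complex_of_real (cmod S)"
      using False by (simp add: z_def)
    hence "z * S = complex_of_real ((cmod S)^2) / complex_of_real (cmod S)"
      unfolding cs .
    also have "\<dots> = complex_of_real (cmod S)" using False by (simp add: power2_eq_square)
    finally show ?thesis by simp
  qed (simp add: z_def)
  define w :: "complex^'n" where "w = axis b 1 + axis d z"
  have wx: "w $ x = (if x = b then 1 else 0) + (if x = d then z else 0)" for x
    by (simp add: w_def axis_nth)
  have Hw: "(herm A *v w) $ x = hh A x b + hh A x d * z" for x
  proof -
    have "(herm A *v w) $ x = (\<Sum>j\<in>UNIV. (if j = b then hh A x j else 0) + (if j = d then hh A x j * z else 0))"
      unfolding mv_nth wx by (intro sum.cong refl) (simp add: distrib_left)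
    also have "\<dots> = hh A x b + hh A x d * z" by (simp add: sum.distrib)
    finally show ?thesis .
  qed
  have "(norm (herm A *v w))^2 = (\<Sum>x\<in>UNIV. (cmod (hh A x b))^2 + (cmod (hh A x d))^2
        + 2 * Re (z * (cnj (hh A x b) * hh A x d)))"
    unfolding norm_sq_vec Hw cmod_add_sq by (intro sum.cong refl) (simp add: norm_mult z1 mult_ac)
  also have "\<dots> = (\<Sum>x\<in>UNIV. (cmod (hh A x b))^2) + (\<Sum>x\<in>UNIV. (cmod (hh A x d))^2)
        + 2 * (\<Sum>x\<in>UNIV. Re (z * (cnj (hh A x b) * hh A x d)))"
    by (simp only: sum.distrib sum_distrib_left)
  also have "(\<Sum>x\<in>UNIV. Re (z * (cnj (hh A x b) * hh A x d))) = Re (z * S)"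
    unfolding S_def sum_distrib_left Re_sum ..
  also have "(\<Sum>x\<in>UNIV. (cmod (hh A x b))^2) = real (card (nb A b))" by (rule deg_sum)
  also have "(\<Sum>x\<in>UNIV. (cmod (hh A x d))^2) = real (card (nb A d))" by (rule deg_sum)
  finally have n1: "(norm (herm A *v w))^2 = real (card (nb A b)) + real (card (nb A d)) + 2 * cmod S"
    unfolding zS .
  have n2: "(norm w)^2 = 2"
  proof -
    have "(norm w)^2 = (\<Sum>x\<in>UNIV. (if x = b then 1 else 0) + (if x = d then 1 else (0::real)))"
      unfolding norm_sq_vec wx by (intro sum.cong refl) (use bd z1 in auto)
    also have "\<dots> = 2" by (simp add: sum.distrib)
    finally show ?thesis .
  qed
  have "w \<noteq> 0"
  proof
    assume "w = 0" hence "w $ b = 0" by simp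
    thus False using bd by (simp add: wx)
  qed
  thus ?thesis unfolding badw_def using n1 n2 big S_def by (intro exI[of _ w]) simp
qed

lemma nb_iff: "v \<in> nb A u \<longleftrightarrow> und A u v" by (simp add: nb_def)

lemma sum_single:
  fixes f :: "'n::finite \<Rightarrow> complex"
  assumes "\<And>u. u \<noteq> c \<Longrightarrow> f u = 0"
  shows "(\<Sum>u\<in>UNIV. f u) = f c"
proof -
  have "(\<Sum>u\<in>UNIV. f u) = f c + (\<Sum>u\<in>UNIV - {c}. f u)" by (simp add: sum.remove)
  also have "(\<Sum>u\<in>UNIV - {c}. f u) = 0" using assms by (intro sum.neutral) auto
  finally show ?thesis by simp
qed

lemma sum_double:
  fixes f :: "'n::finite \<Rightarrow> complex"
  assumes "a \<noteq> c" "\<And>u. u \<noteq> a \<Longrightarrow> u \<noteq> c \<Longrightarrow> f u = 0"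
  shows "(\<Sum>u\<in>UNIV. f u) = f a + f c"
proof -
  have "(\<Sum>u\<in>UNIV. f u) = (\<Sum>u\<in>{a,c}. f u)"
    using assms by (intro sum.mono_neutral_right) auto
  thus ?thesis using assms(1) by simp
qed

lemma W_single:
  fixes A :: "('n::finite \<times> 'n) set"
  assumes bd: "b \<noteq> d" and cb: "card (nb A b) = 2" and cd: "card (nb A d) = 2"
    and i: "nb A b \<inter> nb A d = {c}"
  shows "badw A"
proof (rule W2[OF bd])
  have "c \<in> nb A b" "c \<in> nb A d" using i by auto
  hence cc: "und A c b" "und A c d" using und_sym[of A c b] und_sym[of A c d] by (simp_all add: nb_iff)
  have "(\<Sum>u\<in>UNIV. cnj (hh A u b) * hh A u d) = cnj (hh A c b) * hh A c d"
  proof (rule sum_single)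
    fix u assume "u \<noteq> c"
    hence "\<not> (u \<in> nb A b \<and> u \<in> nb A d)" using i by auto
    hence "\<not> (und A u b \<and> und A u d)" using und_sym[of A u b] und_sym[of A u d] by (simp add: nb_iff)
    thus "cnj (hh A u b) * hh A u d = 0" by (auto simp: hh_zero[symmetric])
  qed
  moreover have "cmod (cnj (hh A c b) * hh A c d) = 1" using cc by (simp add: norm_mult hh_cmod)
  ultimately show "real (card (nb A b)) + real (card (nb A d)) + 2 * cmod (\<Sum>u\<in>UNIV. cnj (hh A u b) * hh A u d) \<ge> 6"
    using cb cd by simp
qed

definition U4 :: "complex set" where "U4 = {1, -1, \<i>, - \<i>}"

lemma U4_mult: "x \<in> U4 \<Longrightarrow> y \<in> U4 \<Longrightarrow> x * y \<in> U4"
  by (auto simp: U4_def)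

lemma hh_U4: "und A u v \<Longrightarrow> hh A u v \<in> U4"
  using hh_vals[of A u v] by (auto simp: U4_def)

lemma U4_bound: "x \<in> U4 \<Longrightarrow> x \<noteq> -1 \<Longrightarrow> cmod (1 + x) \<ge> 1"
  by (auto simp: U4_def cmod_def)

lemma W_C4:
  fixes A :: "('n::finite \<times> 'n) set"
  assumes fr: "c4frame A v0 v1 v2 v3" and n1: "nb A v1 = {v0,v2}" and n3: "nb A v3 = {v0,v2}"
    and om: "omega A v0 v1 v2 v3 \<noteq> -1"
  shows "badw A"
proof -
  have d: "distinct [v0,v1,v2,v3]" using fr by (simp add: c4frame_def)
  have U: "und A v0 v1" "und A v1 v2" "und A v2 v3" "und A v3 v0" using fr by (auto simp: c4frame_def)
  have "(\<Sum>u\<in>UNIV. cnj (hh A u v1) * hh A u v3) = cnj (hh A v0 v1) * hh A v0 v3 + cnj (hh A v2 v1) * hh A v2 v3"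
  proof (rule sum_double)
    show "v0 \<noteq> v2" using d by simp
    fix u assume "u \<noteq> v0" "u \<noteq> v2"
    hence "u \<notin> nb A v1" using n1 by auto
    hence "\<not> und A u v1" using und_sym[of A u v1] by (simp add: nb_iff)
    thus "cnj (hh A u v1) * hh A u v3 = 0" by (simp add: hh_zero[symmetric])
  qed
  also have "\<dots> = hh A v1 v0 * hh A v0 v3 + hh A v1 v2 * hh A v2 v3" by (simp add: cnj_hh)
  finally have S: "(\<Sum>u\<in>UNIV. cnj (hh A u v1) * hh A u v3) = hh A v1 v0 * hh A v0 v3 + hh A v1 v2 * hh A v2 v3" .
  have p: "hh A v0 v1 * hh A v1 v0 = 1" "hh A v3 v0 * hh A v0 v3 = 1"
    using hh_mult_cnj U by auto
  have "hh A v0 v1 * hh A v3 v0 * (hh A v1 v0 * hh A v0 v3 + hh A v1 v2 * hh A v2 v3)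
        = (hh A v0 v1 * hh A v1 v0) * (hh A v3 v0 * hh A v0 v3) + omega A v0 v1 v2 v3"
    by (simp add: omega_def algebra_simps)
  also have "\<dots> = 1 + omega A v0 v1 v2 v3" using p by simp
  finally have e: "hh A v0 v1 * hh A v3 v0 * (hh A v1 v0 * hh A v0 v3 + hh A v1 v2 * hh A v2 v3) = 1 + omega A v0 v1 v2 v3" .
  have m: "cmod (hh A v0 v1 * hh A v3 v0) = 1" using U by (simp add: norm_mult hh_cmod)
  have cS: "cmod (hh A v1 v0 * hh A v0 v3 + hh A v1 v2 * hh A v2 v3) = cmod (1 + omega A v0 v1 v2 v3)"
    using arg_cong[OF e, of cmod] m by (simp add: norm_mult)
  have "omega A v0 v1 v2 v3 \<in> U4"
    unfolding omega_def using U und_sym[of A v3 v0] by (intro U4_mult hh_U4) auto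
  hence g1: "cmod (1 + omega A v0 v1 v2 v3) \<ge> 1" using om by (rule U4_bound)
  show ?thesis
  proof (rule W2[of v1 v3])
    show "v1 \<noteq> v3" using d by simp
    show "real (card (nb A v1)) + real (card (nb A v3)) + 2 * cmod (\<Sum>u\<in>UNIV. cnj (hh A u v1) * hh A u v3) \<ge> 6"
      unfolding S cS n1 n3 using d g1 by simp
  qed
qed

lemma nb_sym: "v \<in> nb A u \<longleftrightarrow> u \<in> nb A v" by (simp add: nb_def und_sym)

lemma nb_finite: "finite (nb A (u::'n::finite))" by simp

lemma card2_obtain:
  assumes "finite S" "card S = 2" "x \<in> S"
  obtains y where "y \<noteq> x" "S = {x,y}"
proof -
  obtain a b where ab: "S = {a,b}" "a \<noteq> b" using assms(2) by (auto simp: card_2_iff)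
  show ?thesis
  proof (cases "x = a")
    case True thus ?thesis using ab that[of b] by simp
  next
    case False
    hence "x = b" using ab assms(3) by auto
    thus ?thesis using ab that[of a] by (simp add: insert_commute)
  qed
qed

lemma card_le2_pair:
  assumes "finite S" "card S \<le> 2" "x \<in> S" "y \<in> S" "x \<noteq> y"
  shows "S = {x,y}"
proof -
  have sub: "{x,y} \<subseteq> S" using assms by auto
  have "card {x,y} = 2" using assms by simp
  moreover have "card {x,y} \<le> card S" by (rule card_mono[OF assms(1) sub])
  ultimately have "card {x,y} = card S" using assms(2) by simp
  thus ?thesis using card_subset_eq[OF assms(1) sub] by simp
qed

lemma card_le1_single:
  assumes "finite S" "card S \<le> 1" "x \<in> S"
  shows "S = {x}"
  using assms by (metis card_1_singletonE card_le_Suc0_iff_eq le_antisym card_0_eq empty_iff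
      less_one not_less singleton_iff subsetI subset_antisym)

lemma card_12:
  assumes "finite S" "card S \<le> 2" "x \<in> S"
  shows "card S = 1 \<or> card S = 2"
proof -
  have "card S \<noteq> 0" using assms by auto
  thus ?thesis using assms(2) by linarith
qed

lemma path_intro:
  assumes d: "distinct xs" and C: "C = set xs" and l: "length xs = Suc k"
    and adj: "\<forall>i\<in>{0..k}. \<forall>j\<in>{0..k}. (xs ! j \<in> nb A (xs ! i)) \<longleftrightarrow> (i = j + 1 \<or> j = i + 1)"
  shows "und_iso_path A C k"
  unfolding und_iso_path_def
proof (intro exI conjI)
  have e: "{0..k} = {..<length xs}" using l by auto
  show "bij_betw ((!) xs) {0..k} C" unfolding e by (rule bij_betw_nth[OF d refl C])
  show "\<forall>i\<in>{0..k}. \<forall>j\<in>{0..k}. und A (xs ! i) (xs ! j) \<longleftrightarrow> (i = j + 1 \<or> j = i + 1)"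
    using adj by (simp add: nb_def)
qed

lemma path3:
  assumes d: "distinct [a,b,c,d]" and C: "C = {a,b,c,d}"
    and na: "nb A a = {b}" and nb: "nb A b = {a,c}" and nc: "nb A c = {b,d}" and nd: "nb A d = {c}"
  shows "und_iso_path A C 3"
proof (rule path_intro[of "[a,b,c,d]"])
  have e: "{0..3::nat} = {0,1,2,3}" by auto
  show "\<forall>i\<in>{0..3}. \<forall>j\<in>{0..3}. ([a,b,c,d] ! j \<in> nb A ([a,b,c,d] ! i)) \<longleftrightarrow> (i = j + 1 \<or> j = i + 1)"
    unfolding e using d by (simp add: na nb nc nd eval_nat_numeral; blast)
qed (use d C in auto)

lemma path2:
  assumes d: "distinct [a,b,c]" and C: "C = {a,b,c}"
    and na: "nb A a = {b}" and nb: "nb A b = {a,c}" and nc: "nb A c = {b}"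
  shows "und_iso_path A C 2"
proof (rule path_intro[of "[a,b,c]"])
  have e: "{0..2::nat} = {0,1,2}" by auto
  show "\<forall>i\<in>{0..2}. \<forall>j\<in>{0..2}. ([a,b,c] ! j \<in> nb A ([a,b,c] ! i)) \<longleftrightarrow> (i = j + 1 \<or> j = i + 1)"
    unfolding e using d by (simp add: na nb nc eval_nat_numeral; blast)
qed (use d C in auto)

lemma path1:
  assumes d: "a \<noteq> b" and C: "C = {a,b}"
    and na: "nb A a = {b}" and nb: "nb A b = {a}"
  shows "und_iso_path A C 1"
proof (rule path_intro[of "[a,b]"])
  have e: "{0..1::nat} = {0,1}" by auto
  show "\<forall>i\<in>{0..1}. \<forall>j\<in>{0..1}. ([a,b] ! j \<in> nb A ([a,b] ! i)) \<longleftrightarrow> (i = j + 1 \<or> j = i + 1)"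
    unfolding e using d by (simp add: na nb)
qed (use d C in auto)

lemma path0:
  assumes C: "C = {a}" and na: "nb A a = {}"
  shows "und_iso_path A C 0"
proof (rule path_intro[of "[a]"])
  show "\<forall>i\<in>{0..0}. \<forall>j\<in>{0..0}. ([a] ! j \<in> nb A ([a] ! i)) \<longleftrightarrow> (i = j + 1 \<or> j = i + 1)"
    by (simp add: na)
qed (use C in auto)

definition nosingle :: "('n \<times> 'n) set \<Rightarrow> bool" where
  "nosingle A \<longleftrightarrow> (\<forall>b d c. b \<noteq> d \<longrightarrow> card (nb A b) = 2 \<longrightarrow> card (nb A d) = 2 \<longrightarrow> nb A b \<inter> nb A d = {c} \<longrightarrow> False)"

lemma nb_irr: "\<forall>x. (x,x) \<notin> A \<Longrightarrow> u \<notin> nb A u"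
  by (simp add: nb_def und_def)

lemma nb_in_comp: "C \<in> weak_components A \<Longrightarrow> x \<in> C \<Longrightarrow> y \<in> nb A x \<Longrightarrow> y \<in> C"
  by (simp add: nb_def und_in_comp)

lemma closed_nb:
  assumes "C \<in> weak_components A" "S \<subseteq> C" "x \<in> S" "\<And>a. a \<in> S \<Longrightarrow> nb A a \<subseteq> S"
  shows "S = C"
  using comp_closed[OF assms(1-3)] assms(4) by (auto simp: nb_def)

lemma handle_b2_d1:
  fixes A :: "('n::finite \<times> 'n) set"
  assumes irr: "\<forall>x. (x,x) \<notin> A" and Cw: "C \<in> weak_components A" and cC: "c \<in> C"
    and deg: "\<forall>u. card (nb A u) \<le> 2" and ns: "nosingle A"
    and nc: "nb A c = {b,d}" and bd: "b \<noteq> d" and ndb: "d \<notin> nb A b"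
    and cb: "card (nb A b) = 2" and ndd: "nb A d = {c}"
  shows "und_iso_path A C 3"
proof -
  have irrn: "u \<notin> nb A u" for u using nb_irr[OF irr] .
  have cinb: "c \<in> nb A b" using nc nb_sym[of b A c] by auto
  obtain a where a: "a \<noteq> c" "nb A b = {c,a}" using card2_obtain[OF nb_finite cb cinb] by blast
  have ad: "a \<noteq> d" using ndb a by auto
  have ab: "a \<noteq> b" using irrn[of b] a by auto
  have bina: "b \<in> nb A a" using a nb_sym[of a A b] by auto
  have cb': "c \<noteq> b" "c \<noteq> d" using irrn[of c] nc by auto
  have "card (nb A a) = 1"
  proof (rule ccontr)
    assume "card (nb A a) \<noteq> 1"
    hence c2: "card (nb A a) = 2" using card_12[OF nb_finite deg[rule_format] bina] by simp
    obtain z where z: "z \<noteq> b" "nb A a = {b,z}" using card2_obtain[OF nb_finite c2 bina] by blast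
    have zd: "z \<noteq> d"
    proof
      assume "z = d"
      hence "d \<in> nb A a" using z by simp
      hence "a \<in> nb A d" using nb_sym[of d A a] by simp
      thus False using ndd a by simp
    qed
    have "nb A a \<inter> nb A c = {b}" using z nc zd by auto
    moreover have "card (nb A c) = 2" using nc bd by simp
    ultimately show False using ns c2 a(1) unfolding nosingle_def by blast
  qed
  hence na: "nb A a = {b}" using card_le1_single[OF nb_finite _ bina] by simp
  have bC: "b \<in> C" "d \<in> C" using nb_in_comp[OF Cw cC] nc by auto
  have aC: "a \<in> C" using nb_in_comp[OF Cw bC(1)] a by auto
  have CS: "{a,b,c,d} = C"
  proof (rule closed_nb[OF Cw])
    show "{a,b,c,d} \<subseteq> C" using aC bC cC by auto
    show "a \<in> {a,b,c,d}" by simp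
    fix x assume "x \<in> {a,b,c,d}"
    thus "nb A x \<subseteq> {a,b,c,d}" using na a nc ndd by auto
  qed
  show ?thesis
  proof (rule path3[OF _ CS[symmetric] na])
    show "distinct [a,b,c,d]" using ab a(1) ad cb' bd by auto
    show "nb A b = {a,c}" using a by auto
  qed (use nc ndd in auto)
qed

lemma struct_comp:
  fixes A :: "('n::finite \<times> 'n) set"
  assumes irr: "\<forall>x. (x,x) \<notin> A" and Cw: "C \<in> weak_components A"
    and deg: "\<forall>u. card (nb A u) \<le> 2" and ns: "nosingle A"
  shows "(\<exists>k\<le>3. und_iso_path A C k) \<or>
    (\<exists>v0 v1 v2 v3. c4frame A v0 v1 v2 v3 \<and> C = {v0,v1,v2,v3} \<and> nb A v1 = {v0,v2} \<and> nb A v3 = {v0,v2})"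
proof -
  have irrn: "u \<notin> nb A u" for u using nb_irr[OF irr] .
  have fin: "finite (nb A u)" for u by simp
  have sym: "v \<in> nb A u \<longleftrightarrow> u \<in> nb A v" for u v by (rule nb_sym)
  obtain x0 where x0: "x0 \<in> C" using comp_nonempty[OF Cw] by blast
  show ?thesis
  proof (cases "\<exists>c\<in>C. card (nb A c) = 2")
    case True
    then obtain c where cC: "c \<in> C" and c2: "card (nb A c) = 2" by blast
    obtain b d where bd: "b \<noteq> d" "nb A c = {b,d}" using c2 by (auto simp: card_2_iff)
    have cinb: "c \<in> nb A b" "c \<in> nb A d" using bd sym[of b c] sym[of d c] by auto
    have cne: "c \<noteq> b" "c \<noteq> d" using irrn[of c] bd by auto
    have bC: "b \<in> C" "d \<in> C" using nb_in_comp[OF Cw cC] bd by auto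
    show ?thesis
    proof (cases "d \<in> nb A b")
      case True
      have nbb: "nb A b = {c,d}" by (rule card_le2_pair[OF fin deg[rule_format] cinb(1) True cne(2)])
      have "b \<in> nb A d" using True sym[of d b] by auto
      hence nbd: "nb A d = {c,b}" by (rule card_le2_pair[OF fin deg[rule_format] cinb(2)]) (use cne in auto)
      have "nb A b \<inter> nb A d = {c}" using nbb nbd bd cne by auto
      moreover have "card (nb A b) = 2" "card (nb A d) = 2" using nbb nbd cne bd by auto
      ultimately have False using ns[unfolded nosingle_def, rule_format, OF bd(1)] by blast
      thus ?thesis ..
    next
      case False
      have nbd': "b \<notin> nb A d" using False sym[of d b] by auto
      have cb12: "card (nb A b) = 1 \<or> card (nb A b) = 2" by (rule card_12[OF fin deg[rule_format] cinb(1)])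
      have cd12: "card (nb A d) = 1 \<or> card (nb A d) = 2" by (rule card_12[OF fin deg[rule_format] cinb(2)])
      show ?thesis
      proof (cases "card (nb A b) = 2")
        case b2: True
        show ?thesis
        proof (cases "card (nb A d) = 2")
          case d2: True
          obtain a where a: "a \<noteq> c" "nb A b = {c,a}" using card2_obtain[OF fin b2 cinb(1)] by blast
          obtain e where e: "e \<noteq> c" "nb A d = {c,e}" using card2_obtain[OF fin d2 cinb(2)] by blast
          have ad: "a \<noteq> d" using False a by auto
          have eb: "e \<noteq> b" using nbd' e by auto
          show ?thesis
          proof (cases "a = e")
            case True
            have bina: "b \<in> nb A a" "d \<in> nb A a" using a e True sym[of a b] sym[of a d] by auto
            have ab: "a \<noteq> b" using irrn[of b] a by auto
            have na: "nb A a = {b,d}" by (rule card_le2_pair[OF fin deg[rule_format] bina bd(1)])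
            have aC: "a \<in> C" using nb_in_comp[OF Cw bC(1)] a by auto
            have CS: "{c,b,a,d} = C"
            proof (rule closed_nb[OF Cw])
              show "{c,b,a,d} \<subseteq> C" using aC bC cC by auto
              show "c \<in> {c,b,a,d}" by simp
              fix x assume "x \<in> {c,b,a,d}"
              thus "nb A x \<subseteq> {c,b,a,d}" using na a e True bd by auto
            qed
            have und_nb: "und A x y \<longleftrightarrow> y \<in> nb A x" for x y by (simp add: nb_def)
            have fr: "c4frame A c b a d"
              unfolding c4frame_def und_nb
            proof (intro conjI)
              show "distinct [c,b,a,d]" using cne a(1) ab ad bd(1) by auto
            qed (use bd a na ab ad cne cinb in auto)
            have "nb A b = {c,a}" "nb A d = {c,a}" using a e True by auto
            hence "c4frame A c b a d \<and> C = {c,b,a,d} \<and> nb A b = {c,a} \<and> nb A d = {c,a}" using CS fr by simp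
            thus ?thesis by blast
          next
            case False
            have ii: "nb A b \<inter> nb A d = {c}" using a e False ad by auto
            have False by (rule ns[unfolded nosingle_def, rule_format, OF bd(1) b2 d2 ii])
            thus ?thesis ..
          qed
        next
          case d2: False
          hence "card (nb A d) = 1" using cd12 by simp
          hence ndd: "nb A d = {c}" using card_le1_single[OF fin _ cinb(2)] by simp
          have "und_iso_path A C 3" by (rule handle_b2_d1[OF irr Cw cC deg ns bd(2) bd(1) False b2 ndd])
          thus ?thesis by auto
        qed
      next
        case b2: False
        hence "card (nb A b) = 1" using cb12 by simp
        hence nbb: "nb A b = {c}" using card_le1_single[OF fin _ cinb(1)] by simp
        show ?thesis
        proof (cases "card (nb A d) = 2")
          case d2: True
          have "und_iso_path A C 3"
            by (rule handle_b2_d1[OF irr Cw cC deg ns _ _ nbd' d2 nbb]) (use bd in blast)+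
          thus ?thesis by auto
        next
          case d2: False
          hence "card (nb A d) = 1" using cd12 by simp
          hence ndd: "nb A d = {c}" using card_le1_single[OF fin _ cinb(2)] by simp
          have CS: "{b,c,d} = C"
          proof (rule closed_nb[OF Cw])
            show "{b,c,d} \<subseteq> C" using bC cC by auto
            show "c \<in> {b,c,d}" by simp
            fix x assume "x \<in> {b,c,d}"
            thus "nb A x \<subseteq> {b,c,d}" using nbb ndd bd by auto
          qed
          have "und_iso_path A C 2"
            by (rule path2[OF _ CS[symmetric] nbb _ ndd]) (use bd cne in auto)
          thus ?thesis by auto
        qed
      qed
    qed
  next
    case False
    hence le1: "card (nb A u) \<le> 1" if "u \<in> C" for u
    proof -
      have "card (nb A u) \<noteq> 2" using False that by blast
      thus ?thesis using deg[rule_format, of u] by linarith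
    qed
    show ?thesis
    proof (cases "nb A x0 = {}")
      case True
      have "{x0} = C" by (rule closed_nb[OF Cw]) (use x0 True in auto)
      hence "und_iso_path A C 0" using path0[OF _ True] by simp
      thus ?thesis by auto
    next
      case False
      then obtain y where y: "y \<in> nb A x0" by blast
      have n0: "nb A x0 = {y}" by (rule card_le1_single[OF fin le1[OF x0] y])
      have yC: "y \<in> C" using nb_in_comp[OF Cw x0 y] .
      have "x0 \<in> nb A y" using y sym[of y x0] by simp
      hence ny: "nb A y = {x0}" by (rule card_le1_single[OF fin le1[OF yC]])
      have xy: "x0 \<noteq> y" using irrn y by auto
      have "{x0,y} = C" by (rule closed_nb[OF Cw]) (use x0 yC n0 ny in auto)
      hence "und_iso_path A C 1" using path1[OF xy _ n0 ny] by simp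
      thus ?thesis by auto
    qed
  qed
qed

lemma und_iso_C4_intro:
  fixes A :: "('n \<times> 'n) set"
  assumes irr: "\<forall>x. (x,x) \<notin> A" and fr: "c4frame A v0 v1 v2 v3" and C: "C = {v0,v1,v2,v3}"
  shows "und_iso_C4 A C"
  unfolding und_iso_C4_def
proof (intro exI conjI)
  let ?xs = "[v0,v1,v2,v3]"
  have d: "distinct ?xs" using fr by (simp add: c4frame_def)
  show "bij_betw ((!) ?xs) {0..<4} C"
    by (rule bij_betw_nth[OF d]) (use C in auto)
  have u: "und A v0 v1" "und A v1 v2" "und A v2 v3" "und A v3 v0"
    "\<not> und A v0 v2" "\<not> und A v1 v3" using fr by (auto simp: c4frame_def)
  have u': "und A v1 v0" "und A v2 v1" "und A v3 v2" "und A v0 v3" "\<not> und A v2 v0" "\<not> und A v3 v1"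
    using u und_sym[of A v1 v0] und_sym[of A v2 v1] und_sym[of A v3 v2] und_sym[of A v0 v3]
      und_sym[of A v2 v0] und_sym[of A v3 v1] by simp_all
  have ux: "\<not> und A x x" for x using irr by (simp add: und_def)
  have e: "{0..<4::nat} = {0,1,2,3}" by auto
  show "\<forall>i\<in>{0..<4}. \<forall>j\<in>{0..<4}. und A (?xs ! i) (?xs ! j) \<longleftrightarrow> (j = (i + 1) mod 4 \<or> i = (j + 1) mod 4)"
  proof -
    have n: "?xs ! 0 = v0" "?xs ! 1 = v1" "?xs ! 2 = v2" "?xs ! 3 = v3" by (simp_all add: numeral_eq_Suc)
    show ?thesis unfolding e using u u' ux by (simp add: n)
  qed
qed

lemma badw_contra:
  fixes A :: "('n::finite \<times> 'n) set"
  assumes E: "\<forall>l. mat_eigenvalue (herm A) l \<longrightarrow> (\<exists>r::real. l = complex_of_real r \<and> - sqrt 3 < r \<and> r < sqrt 3)"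
  shows "\<not> badw A"
proof
  assume "badw A"
  then obtain w where w: "w \<noteq> 0" "(norm (herm A *v w))^2 \<ge> 3 * (norm w)^2" unfolding badw_def by blast
  obtain r where ev: "mat_eigenvalue (herm A) (complex_of_real r)" and r3: "r^2 \<ge> 3"
    using exists_big_eig[OF w] by blast
  obtain r' where "complex_of_real r = complex_of_real r'" "- sqrt 3 < r'" "r' < sqrt 3"
    using E ev by blast
  hence "\<bar>r\<bar> < sqrt 3" by auto
  hence "\<bar>r\<bar>^2 < (sqrt 3)^2" by (intro power_strict_mono) auto
  thus False using r3 by simp
qed

lemma only_if:
  fixes A :: "('n::finite \<times> 'n) set"
  assumes irr: "\<forall>x. (x,x) \<notin> A"
    and E: "\<forall>l. mat_eigenvalue (herm A) l \<longrightarrow> (\<exists>r::real. l = complex_of_real r \<and> - sqrt 3 < r \<and> r < sqrt 3)"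
  shows "\<forall>C\<in>weak_components A. good A C"
proof
  fix C assume Cw: "C \<in> weak_components A"
  have nb: "\<not> badw A" by (rule badw_contra[OF E])
  have deg: "\<forall>u. card (nb A u) \<le> 2"
  proof
    fix u show "card (nb A u) \<le> 2"
    proof (rule ccontr)
      assume "\<not> card (nb A u) \<le> 2"
      hence c3: "card (nb A u) \<ge> 3" by simp
      show False using W1[OF c3] nb by simp
    qed
  qed
  have ns0: "False" if "b \<noteq> d" "card (nb A b) = 2" "card (nb A d) = 2" "nb A b \<inter> nb A d = {c}" for b d c
    using W_single[OF that] nb by simp
  have ns: "nosingle A" unfolding nosingle_def using ns0 by blast
  from struct_comp[OF irr Cw deg ns]
  show "good A C"
  proof (elim disjE exE conjE)
    fix k assume "k \<le> 3" "und_iso_path A C k" thus ?thesis unfolding good_def by blast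
  next
    fix v0 v1 v2 v3
    assume fr: "c4frame A v0 v1 v2 v3" and C: "C = {v0,v1,v2,v3}"
      and n1: "nb A v1 = {v0,v2}" and n3: "nb A v3 = {v0,v2}"
    have om: "omega A v0 v1 v2 v3 = -1"
    proof (rule ccontr)
      assume "omega A v0 v1 v2 v3 \<noteq> -1"
      hence "badw A" by (rule W_C4[OF fr n1 n3])
      thus False using nb by simp
    qed
    have "QP A v0 v1 v2 v3" by (rule QP_all[OF irr fr])
    hence "omega A v0 v1 v2 v3 = -1 \<longrightarrow> iso_tilde_C4 A {v0,v1,v2,v3} \<or>
       (strongly_connected_on A {v0,v1,v2,v3} \<and> card (digons_on A {v0,v1,v2,v3}) = 2)"
      unfolding QP_def by (rule conjunct2)
    hence "iso_tilde_C4 A C \<or> (strongly_connected_on A C \<and> card (digons_on A C) = 2)"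
      using om unfolding C by (rule mp)
    moreover have "und_iso_C4 A C" by (rule und_iso_C4_intro[OF irr fr C])
    ultimately show ?thesis by (simp add: good_def)
  qed
qed

theorem theorem9p3:
  fixes A :: "('n::finite \<times> 'n) set"
  assumes irrefl: "\<forall>x. (x,x) \<notin> A"
  shows "(\<forall>l. mat_eigenvalue (herm A) l \<longrightarrow>
            (\<exists>r::real. l = complex_of_real r \<and> - sqrt 3 < r \<and> r < sqrt 3))
     \<longleftrightarrow>
     (\<forall>C \<in> weak_components A.
        (\<exists>k \<le> 3. und_iso_path A C k)
      \<or> (und_iso_C4 A C \<and>
          (iso_tilde_C4 A C \<or>
           (strongly_connected_on A C \<and> card (digons_on A C) = 2))))"
proof -
  have "(\<forall>C \<in> weak_components A.
        (\<exists>k \<le> 3. und_iso_path A C k)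
      \<or> (und_iso_C4 A C \<and>
          (iso_tilde_C4 A C \<or>
           (strongly_connected_on A C \<and> card (digons_on A C) = 2)))) \<longleftrightarrow>
      (\<forall>C \<in> weak_components A. good A C)" by (simp only: good_def)
  note eqn = this
  show ?thesis
  proof
    assume "\<forall>l. mat_eigenvalue (herm A) l \<longrightarrow> (\<exists>r::real. l = complex_of_real r \<and> - sqrt 3 < r \<and> r < sqrt 3)"
    hence "\<forall>C \<in> weak_components A. good A C" by (rule only_if[OF irrefl])
    thus "\<forall>C \<in> weak_components A.
        (\<exists>k \<le> 3. und_iso_path A C k)
      \<or> (und_iso_C4 A C \<and>
          (iso_tilde_C4 A C \<or>
           (strongly_connected_on A C \<and> card (digons_on A C) = 2)))" by (rule iffD2[OF eqn])
  next
    assume "\<forall>C \<in> weak_components A.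
        (\<exists>k \<le> 3. und_iso_path A C k)
      \<or> (und_iso_C4 A C \<and>
          (iso_tilde_C4 A C \<or>
           (strongly_connected_on A C \<and> card (digons_on A C) = 2)))"
    hence "\<forall>C \<in> weak_components A. good A C" by (rule iffD1[OF eqn])
    thus "\<forall>l. mat_eigenvalue (herm A) l \<longrightarrow> (\<exists>r::real. l = complex_of_real r \<and> - sqrt 3 < r \<and> r < sqrt 3)"
      by (rule if_dir[OF irrefl])
  qed
qed

end
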